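(* Let $\mathfrak{l}$ be a finite-dimensional restricted Lie algebra over an algebraically closed field $\mathbb{K}$ of characteristic $p$ with prime subfield $\mathbb{F}$, and let $\chi\in\mathfrak{l}^\ast$ be arbitrary. Then $u(\mathfrak{l}_\chi)$ is isomorphic as an algebra to $\bigoplus_{i\in\mathbb{F}}U_{i\chi}(\mathfrak{l})$.
   Context: $\mathfrak{l}_\chi=\mathfrak{l}\oplus\mathbb{K}c$ is the restricted Lie algebra with bracket $[a+\alpha c,b+\beta c]=[a,b]$ and $p$-map $(a+\alpha c)^{[p]}=a^{[p]}+(\chi(a)^p+\alpha^p)c$; $u(\cdot)$ is the restricted enveloping algebra. For $\xi\in\mathfrak{l}^\ast$, the reduced enveloping algebra $U_\xi(\mathfrak{l})$ is the quotient of the universal enveloping algebra $U(\mathfrak{l})$ by the ideal generated by $x^p-x^{[p]}-\xi(x)^p\cdot 1$ for all $x\in\mathfrak{l}$. *)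

theory Defs
  imports "HOL-Algebra.QuotRing" "HOL-Algebra.Ideal" "HOL-Computational_Algebra.Polynomial"
    "HOL-Library.Product_Plus" "HOL-Library.FuncSet"
begin

definition alg_closed :: "'k::field itself \<Rightarrow> bool" where
  "alg_closed _ \<longleftrightarrow> (\<forall>q :: 'k poly. degree q > 0 \<longrightarrow> (\<exists>x. poly q x = 0))"

definition prime_subfield :: "nat \<Rightarrow> 'k::field set" where
  "prime_subfield p = {of_nat i | i. i < p}"

definition lie_algebra :: "('k::field \<Rightarrow> 'l \<Rightarrow> 'l) \<Rightarrow> ('l::ab_group_add \<Rightarrow> 'l \<Rightarrow> 'l) \<Rightarrow> bool" where
  "lie_algebra sc br \<longleftrightarrow> vector_space sc
     \<and> (\<forall>x. Vector_Spaces.linear sc sc (br x))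
     \<and> (\<forall>y. Vector_Spaces.linear sc sc (\<lambda>x. br x y))
     \<and> (\<forall>x. br x x = 0)
     \<and> (\<forall>x y z. br x (br y z) + br y (br z x) + br z (br x y) = 0)"

text \<open>Jacobson's s_i(a,b): i * s_i(a,b) is the coefficient of t^(i-1) in ad(ta+b)^(p-1)(a).
  Expanding ad(ta+b)^(p-1) as a sum over words in {a,b} of length p-1 (True = a, False = b),
  this coefficient is the sum over words with exactly i-1 letters a.\<close>
definition lie_s :: "('k::field \<Rightarrow> 'l \<Rightarrow> 'l) \<Rightarrow> ('l::ab_group_add \<Rightarrow> 'l \<Rightarrow> 'l) \<Rightarrow> nat \<Rightarrow> nat \<Rightarrow> 'l \<Rightarrow> 'l \<Rightarrow> 'l" where
  "lie_s sc br p i a b = sc (inverse (of_nat i))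
     (\<Sum>\<sigma>\<in>{\<sigma>. length \<sigma> = p - 1 \<and> count_list \<sigma> True = i - 1}.
        foldr (\<lambda>t v. br (if t then a else b) v) \<sigma> a)"

definition restricted_lie_algebra ::
  "('k::field \<Rightarrow> 'l \<Rightarrow> 'l) \<Rightarrow> ('l::ab_group_add \<Rightarrow> 'l \<Rightarrow> 'l) \<Rightarrow> ('l \<Rightarrow> 'l) \<Rightarrow> nat \<Rightarrow> bool" where
  "restricted_lie_algebra sc br pm p \<longleftrightarrow> lie_algebra sc br
     \<and> (\<forall>c x. pm (sc c x) = sc (c ^ p) (pm x))
     \<and> (\<forall>x y. br (pm x) y = (br x ^^ p) y)
     \<and> (\<forall>a b. pm (a + b) = pm a + pm b + (\<Sum>i=1..p-1. lie_s sc br p i a b))"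

section \<open>The central extension l_chi = l + Kc\<close>

definition ext_scale :: "('k::field \<Rightarrow> 'l \<Rightarrow> 'l) \<Rightarrow> 'k \<Rightarrow> 'l \<times> 'k \<Rightarrow> 'l \<times> 'k" where
  "ext_scale sc c v = (sc c (fst v), c * snd v)"

definition ext_br :: "('l::ab_group_add \<Rightarrow> 'l \<Rightarrow> 'l) \<Rightarrow> 'l \<times> 'k::field \<Rightarrow> 'l \<times> 'k \<Rightarrow> 'l \<times> 'k" where
  "ext_br br v w = (br (fst v) (fst w), 0)"

definition ext_pmap :: "('l \<Rightarrow> 'l) \<Rightarrow> nat \<Rightarrow> ('l \<Rightarrow> 'k::field) \<Rightarrow> 'l \<times> 'k \<Rightarrow> 'l \<times> 'k" where
  "ext_pmap pm p \<chi> v = (pm (fst v), \<chi> (fst v) ^ p + snd v ^ p)"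

section \<open>Free associative algebra K<V> on the set V (the monoid algebra of words)\<close>

definition free_alg :: "('v list \<Rightarrow> 'k::field) ring" where
  "free_alg = \<lparr>carrier = {f. finite {w. f w \<noteq> 0}},
     monoid.mult = (\<lambda>f g w. \<Sum>i\<le>length w. f (take i w) * g (drop i w)),
     one = (\<lambda>w. if w = [] then 1 else 0),
     zero = (\<lambda>w. 0),
     add = (\<lambda>f g w. f w + g w)\<rparr>"

definition wd :: "'v list \<Rightarrow> 'v list \<Rightarrow> 'k::field" where
  "wd u = (\<lambda>w. if w = u then 1 else 0)"

text \<open>Relations turning K<V> into the tensor algebra T(V) and then into U(V):
  linearity of V -> T(V), and xy - yx - [x,y].\<close>
definition env_rels :: "('k::field \<Rightarrow> 'v \<Rightarrow> 'v) \<Rightarrow> ('v::ab_group_add \<Rightarrow> 'v \<Rightarrow> 'v) \<Rightarrow> ('v list \<Rightarrow> 'k) set" where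
  "env_rels sc br =
     {(\<lambda>w. wd [a + b] w - wd [a] w - wd [b] w) | a b. True}
   \<union> {(\<lambda>w. wd [sc c a] w - c * wd [a] w) | c a. True}
   \<union> {(\<lambda>w. wd [a, b] w - wd [b, a] w - wd [br a b] w) | a b. True}"

definition red_rels :: "('v \<Rightarrow> 'v) \<Rightarrow> nat \<Rightarrow> ('v \<Rightarrow> 'k::field) \<Rightarrow> ('v list \<Rightarrow> 'k) set" where
  "red_rels pm p \<xi> = {(\<lambda>w. wd (replicate p x) w - wd [pm x] w - (\<xi> x) ^ p * wd [] w) | x. True}"

definition red_ideal :: "('k::field \<Rightarrow> 'v \<Rightarrow> 'v) \<Rightarrow> ('v::ab_group_add \<Rightarrow> 'v \<Rightarrow> 'v) \<Rightarrow> ('v \<Rightarrow> 'v) \<Rightarrow> nat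
    \<Rightarrow> ('v \<Rightarrow> 'k) \<Rightarrow> ('v list \<Rightarrow> 'k) set" where
  "red_ideal sc br pm p \<xi> = genideal free_alg (env_rels sc br \<union> red_rels pm p \<xi>)"

text \<open>Reduced enveloping algebra U_xi(V) = U(V) / (x^p - x^[p] - xi(x)^p); for xi = 0 this is
  the restricted enveloping algebra u(V).\<close>
definition reduced_env :: "('k::field \<Rightarrow> 'v \<Rightarrow> 'v) \<Rightarrow> ('v::ab_group_add \<Rightarrow> 'v \<Rightarrow> 'v) \<Rightarrow> ('v \<Rightarrow> 'v) \<Rightarrow> nat
    \<Rightarrow> ('v \<Rightarrow> 'k) \<Rightarrow> ('v list \<Rightarrow> 'k) set ring" where
  "reduced_env sc br pm p \<xi> = free_alg Quot (red_ideal sc br pm p \<xi>)"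

definition env_scalar :: "('k::field \<Rightarrow> 'v \<Rightarrow> 'v) \<Rightarrow> ('v::ab_group_add \<Rightarrow> 'v \<Rightarrow> 'v) \<Rightarrow> ('v \<Rightarrow> 'v) \<Rightarrow> nat
    \<Rightarrow> ('v \<Rightarrow> 'k) \<Rightarrow> 'k \<Rightarrow> ('v list \<Rightarrow> 'k) set" where
  "env_scalar sc br pm p \<xi> c = red_ideal sc br pm p \<xi> +>\<^bsub>free_alg\<^esub> (\<lambda>w. c * wd [] w)"

section \<open>Finite direct sums (= direct products) of rings, and algebra isomorphisms\<close>

definition ring_prod :: "'i set \<Rightarrow> ('i \<Rightarrow> ('a, 'm) ring_scheme) \<Rightarrow> ('i \<Rightarrow> 'a) ring" where
  "ring_prod I R = \<lparr>carrier = PiE I (\<lambda>i. carrier (R i)),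
     monoid.mult = (\<lambda>f g. \<lambda>i\<in>I. f i \<otimes>\<^bsub>R i\<^esub> g i),
     one = (\<lambda>i\<in>I. \<one>\<^bsub>R i\<^esub>),
     zero = (\<lambda>i\<in>I. \<zero>\<^bsub>R i\<^esub>),
     add = (\<lambda>f g. \<lambda>i\<in>I. f i \<oplus>\<^bsub>R i\<^esub> g i)\<rparr>"

text \<open>Isomorphism of unital K-algebras A, B with structure maps eA, eB : K -> A, B:
  a ring isomorphism compatible with the structure maps (hence K-linear).\<close>
definition alg_iso :: "('a, 'm) ring_scheme \<Rightarrow> ('b, 'n) ring_scheme \<Rightarrow> ('k \<Rightarrow> 'a) \<Rightarrow> ('k \<Rightarrow> 'b) \<Rightarrow> bool" where
  "alg_iso A B eA eB \<longleftrightarrow> (\<exists>\<phi>. \<phi> \<in> ring_iso A B \<and> (\<forall>c. \<phi> (eA c) = eB c))"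

end

theory Submission
  imports Defs "HOL-Computational_Algebra.Primes"
begin


definition fm :: "('v list \<Rightarrow> 'k::field) \<Rightarrow> ('v list \<Rightarrow> 'k) \<Rightarrow> 'v list \<Rightarrow> 'k" where
  "fm f g w = (\<Sum>i\<le>length w. f (take i w) * g (drop i w))"
definition fadd :: "('v list \<Rightarrow> 'k::field) \<Rightarrow> ('v list \<Rightarrow> 'k) \<Rightarrow> 'v list \<Rightarrow> 'k" where
  "fadd f g = (\<lambda>w. f w + g w)"
definition fsub :: "('v list \<Rightarrow> 'k::field) \<Rightarrow> ('v list \<Rightarrow> 'k) \<Rightarrow> 'v list \<Rightarrow> 'k" where
  "fsub f g = (\<lambda>w. f w - g w)"
definition fsc :: "'k::field \<Rightarrow> ('v list \<Rightarrow> 'k) \<Rightarrow> 'v list \<Rightarrow> 'k" where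
  "fsc c f = (\<lambda>w. c * f w)"
definition fsum :: "('i \<Rightarrow> 'v list \<Rightarrow> 'k::field) \<Rightarrow> 'i set \<Rightarrow> 'v list \<Rightarrow> 'k" where
  "fsum F A = (\<lambda>w. \<Sum>i\<in>A. F i w)"
definition fzero :: "'v list \<Rightarrow> 'k::field" where "fzero = (\<lambda>w. 0)"

abbreviation FC :: "('v list \<Rightarrow> 'k::field) set" where "FC \<equiv> carrier free_alg"

lemma FC_iff: "f \<in> FC \<longleftrightarrow> finite {w. f w \<noteq> 0}" by (simp add: free_alg_def)

lemma fa_simps: "monoid.mult free_alg = fm" "add free_alg = fadd" "one free_alg = wd []"
  "zero free_alg = fzero"
  by (auto simp: free_alg_def fm_def fadd_def wd_def fzero_def fun_eq_iff)

lemma fm_Nil[simp]: "fm f g [] = f [] * g []" by (simp add: fm_def)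
lemma fm_Cons: "fm f g (x#w) = f [] * g (x#w) + fm (\<lambda>u. f (x#u)) g w"
  unfolding fm_def by (simp add: sum.atMost_Suc_shift del: sum.atMost_Suc)

lemma fadd_app: "fadd f g w = f w + g w" by (simp add: fadd_def)
lemma fsub_app: "fsub f g w = f w - g w" by (simp add: fsub_def)
lemma fsc_app: "fsc c f w = c * f w" by (simp add: fsc_def)
lemma fsum_app: "fsum F A w = (\<Sum>i\<in>A. F i w)" by (simp add: fsum_def)
lemma fzero_app: "fzero w = 0" by (simp add: fzero_def)
lemmas fapp = fadd_app fsub_app fsc_app fsum_app fzero_app
lemma fsc_0[simp]: "fsc 0 f = fzero" by (simp add: fun_eq_iff fapp)
lemma fsc_1[simp]: "fsc 1 f = f" by (simp add: fun_eq_iff fapp)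
lemma fadd_fzero_left[simp]: "fadd fzero f = f" by (simp add: fun_eq_iff fapp)
lemma fadd_fzero_right[simp]: "fadd f fzero = f" by (simp add: fun_eq_iff fapp)
lemma fsub_self[simp]: "fsub f f = fzero" by (simp add: fun_eq_iff fapp)
lemma fsub_fzero_right[simp]: "fsub f fzero = f" by (simp add: fun_eq_iff fapp)

lemma fm_fadd_left: "fm (fadd f g) h = fadd (fm f h) (fm g h)"
  by (simp add: fun_eq_iff fapp fm_def distrib_right sum.distrib)
lemma fm_fadd_right: "fm h (fadd f g) = fadd (fm h f) (fm h g)"
  by (simp add: fun_eq_iff fapp fm_def distrib_left sum.distrib)
lemma fm_fsub_left: "fm (fsub f g) h = fsub (fm f h) (fm g h)"
  by (simp add: fun_eq_iff fapp fm_def left_diff_distrib sum_subtractf)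
lemma fm_fsub_right: "fm h (fsub f g) = fsub (fm h f) (fm h g)"
  by (simp add: fun_eq_iff fapp fm_def right_diff_distrib sum_subtractf)
lemma fm_fsc_left: "fm (fsc c f) h = fsc c (fm f h)"
  by (simp add: fun_eq_iff fapp fm_def sum_distrib_left mult.assoc)
lemma fm_fsc_right: "fm h (fsc c f) = fsc c (fm h f)"
  by (simp add: fun_eq_iff fapp fm_def sum_distrib_left mult.left_commute)
lemma fm_fsum_left: "fm (fsum F A) h = fsum (\<lambda>i. fm (F i) h) A"
  by (simp add: fun_eq_iff fapp fm_def sum_distrib_right sum.swap[of _ A])
lemma fm_fsum_right: "fm h (fsum F A) = fsum (\<lambda>i. fm h (F i)) A"
  by (simp add: fun_eq_iff fapp fm_def sum_distrib_left sum.swap[of _ A])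
lemma fm_fzero_left[simp]: "fm fzero h = fzero" by (simp add: fun_eq_iff fapp fm_def)
lemma fm_fzero_right[simp]: "fm h fzero = fzero" by (simp add: fun_eq_iff fapp fm_def)

lemma fm_assoc: "fm (fm f g) h = fm f (fm g h)"
proof
  fix w show "fm (fm f g) h w = fm f (fm g h) w"
  proof (induction w arbitrary: f)
    case Nil then show ?case by simp
  next
    case (Cons x w)
    have e: "(\<lambda>u. fm f g (x#u)) = fadd (fsc (f []) (\<lambda>u. g (x#u))) (fm (\<lambda>u. f (x#u)) g)"
      by (simp add: fun_eq_iff fm_Cons fapp)
    have "fm (fm f g) h (x#w) = fm f g [] * h (x#w) + fm (\<lambda>u. fm f g (x#u)) h w" by (rule fm_Cons)
    also have "\<dots> = f [] * g [] * h (x#w) + (f [] * fm (\<lambda>u. g (x#u)) h w + fm (\<lambda>u. f (x#u)) (fm g h) w)"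
      unfolding e fm_fadd_left fm_fsc_left by (simp add: fapp Cons.IH)
    also have "\<dots> = fm f (fm g h) (x#w)" by (simp add: fm_Cons[of f "fm g h"] fm_Cons[of g h] distrib_left mult.assoc)
    finally show ?case .
  qed
qed

lemma wd_app: "wd u w = (if w = u then 1 else 0)" by (simp add: wd_def)

lemma fm_one_left[simp]: "fm (wd []) f = f"
proof
  fix w show "fm (wd []) f w = f w"
    by (cases w) (simp_all add: fm_Cons wd_app cong: if_cong, simp add: fm_def wd_app)
qed

lemma fm_one_right[simp]: "fm f (wd []) = f"
proof
  fix w show "fm f (wd []) w = f w"
    by (induction w arbitrary: f) (simp_all add: fm_Cons wd_app)
qed

lemma fm_wd_Cons_Nil: "fm (wd (a#u)) g [] = 0" by (simp add: wd_app)
lemma fm_wd_Cons_Cons: "fm (wd (a#u)) g (x#w) = (if x = a then fm (wd u) g w else 0)"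
proof -
  have "(\<lambda>s. wd (a#u) (x#s) :: 'a) = (if x = a then wd u else fzero)"
    by (auto simp: fun_eq_iff wd_app fapp)
  then show ?thesis by (simp add: fm_Cons wd_app fapp)
qed

lemma fm_wd_wd: "fm (wd u) (wd v) = (wd (u@v) :: 'v list \<Rightarrow> 'k::field)"
proof
  fix w show "fm (wd u) (wd v) w = (wd (u@v) w :: 'k)"
  proof (induction u arbitrary: w)
    case Nil then show ?case by simp
  next
    case (Cons a u) then show ?case
      by (cases w) (simp_all only: fm_wd_Cons_Nil fm_wd_Cons_Cons, auto simp: wd_app)
  qed
qed

lemma fm_support: "{w. fm f g w \<noteq> 0} \<subseteq> (\<lambda>(a,b). a@b) ` ({w. f w \<noteq> 0} \<times> {w. g w \<noteq> 0})"
proof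
  fix w assume "w \<in> {w. fm f g w \<noteq> 0}"
  then obtain i where "f (take i w) * g (drop i w) \<noteq> 0" unfolding fm_def
    by (auto elim: sum.not_neutral_contains_not_neutral)
  then show "w \<in> (\<lambda>(a,b). a@b) ` ({w. f w \<noteq> 0} \<times> {w. g w \<noteq> 0})"
    by (intro image_eqI[of _ _ "(take i w, drop i w)"]) auto
qed

lemma FC_fm[intro]: "f \<in> FC \<Longrightarrow> g \<in> FC \<Longrightarrow> fm f g \<in> FC"
  unfolding FC_iff by (rule finite_subset[OF fm_support]) auto
lemma FC_fadd[intro]: "f \<in> FC \<Longrightarrow> g \<in> FC \<Longrightarrow> fadd f g \<in> FC"
  unfolding FC_iff by (rule finite_subset[of _ "{w. f w \<noteq> 0} \<union> {w. g w \<noteq> 0}"]) (auto simp: fapp)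
lemma FC_fsub[intro]: "f \<in> FC \<Longrightarrow> g \<in> FC \<Longrightarrow> fsub f g \<in> FC"
  unfolding FC_iff by (rule finite_subset[of _ "{w. f w \<noteq> 0} \<union> {w. g w \<noteq> 0}"]) (auto simp: fapp)
lemma FC_fsc[intro]: "f \<in> FC \<Longrightarrow> fsc c f \<in> FC"
  unfolding FC_iff by (rule finite_subset[of _ "{w. f w \<noteq> 0}"]) (auto simp: fapp)
lemma FC_fzero[intro]: "fzero \<in> FC" unfolding FC_iff by (simp add: fapp)
lemma FC_wd[intro]: "wd u \<in> FC" unfolding FC_iff by (rule finite_subset[of _ "{u}"]) (auto simp: wd_app)
lemma FC_fsum[intro]: "(\<And>i. i \<in> A \<Longrightarrow> F i \<in> FC) \<Longrightarrow> fsum F A \<in> FC"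
proof (induction A rule: infinite_finite_induct)
  case (infinite A) then show ?case by (simp add: fsum_def FC_iff)
next
  case empty then show ?case by (simp add: fsum_def FC_iff)
next
  case (insert a A)
  have "fsum F (insert a A) = fadd (F a) (fsum F A)" using insert by (simp add: fun_eq_iff fapp)
  then show ?case using insert by (simp only:) (rule FC_fadd; auto)
qed

lemma fsum_insert: "finite A \<Longrightarrow> a \<notin> A \<Longrightarrow> fsum F (insert a A) = fadd (F a) (fsum F A)"
  by (simp add: fun_eq_iff fapp)

lemma basis_expand: "f \<in> FC \<Longrightarrow> f = fsum (\<lambda>w. fsc (f w) (wd w)) {w. f w \<noteq> 0}"
proof
  fix u assume f: "f \<in> FC"
  have "(\<Sum>w\<in>{w. f w \<noteq> 0}. f w * wd w u) = (\<Sum>w\<in>{w. f w \<noteq> 0}. if w = u then f w else 0)"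
    by (rule sum.cong) (auto simp: wd_app)
  also have "\<dots> = f u" using f by (simp add: FC_iff sum.delta)
  finally show "f u = fsum (\<lambda>w. fsc (f w) (wd w)) {w. f w \<noteq> 0} u" by (simp add: fapp)
qed

lemma fa_induct[consumes 1, case_names zero add sc wd]:
  assumes f: "f \<in> FC"
    and z: "P fzero"
    and a: "\<And>g h. g \<in> FC \<Longrightarrow> h \<in> FC \<Longrightarrow> P g \<Longrightarrow> P h \<Longrightarrow> P (fadd g h)"
    and s: "\<And>c g. g \<in> FC \<Longrightarrow> P g \<Longrightarrow> P (fsc c g)"
    and w: "\<And>w. P (wd w)"
  shows "P f"
proof -
  have "finite A \<Longrightarrow> P (fsum (\<lambda>w. fsc (f w) (wd w)) A)" for A
  proof (induction A rule: finite_induct)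
    case empty then show ?case using z by (simp add: fsum_def fzero_def)
  next
    case (insert a A)
    have "P (fadd (fsc (f a) (wd a)) (fsum (\<lambda>w. fsc (f w) (wd w)) A))"
      by (intro a s w FC_fsc FC_wd FC_fsum insert.IH)
    then show ?case using insert by (simp add: fsum_insert)
  qed
  then show ?thesis using f basis_expand[OF f] by (metis FC_iff)
qed


lemma ring_fa: "ring (free_alg :: ('v list \<Rightarrow> 'k::field) ring)"
proof (rule ringI)
  show "abelian_group (free_alg :: ('v list \<Rightarrow> 'k::field) ring)"
  proof (rule abelian_groupI, unfold fa_simps)
    fix x :: "'v list \<Rightarrow> 'k" assume x: "x \<in> FC"
    show "\<exists>y\<in>FC. fadd y x = fzero"
      by (rule bexI[of _ "fsc (-1) x"]) (auto simp: fun_eq_iff fapp x)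
  qed (auto simp: fun_eq_iff fapp algebra_simps)
  show "monoid (free_alg :: ('v list \<Rightarrow> 'k::field) ring)"
    by (rule monoidI, unfold fa_simps) (auto simp: fm_assoc)
qed (auto simp: fa_simps fm_fadd_left fm_fadd_right)

lemma fa_neg: "x \<in> FC \<Longrightarrow> a_inv free_alg x = fsc (-1) x"
  by (rule abelian_group.minus_equality[OF ring.is_abelian_group[OF ring_fa]])
     (auto simp: fa_simps fun_eq_iff fapp)

lemma fa_minus: "x \<in> FC \<Longrightarrow> y \<in> FC \<Longrightarrow> a_minus free_alg x y = fsub x y"
  by (simp add: a_minus_def fa_neg fa_simps fun_eq_iff fapp)

lemma fsc_as_fm: "fsc c f = fm (fsc c (wd [])) f"
  by (simp add: fm_fsc_left)
lemma fsc_as_fm': "fsc c f = fm f (fsc c (wd []))"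
  by (simp add: fm_fsc_right)

context
  fixes J :: "('v list \<Rightarrow> 'k::field) set"
  assumes J: "ideal J free_alg"
begin

lemma id_sub: "f \<in> J \<Longrightarrow> f \<in> FC"
  using J by (meson additive_subgroup.a_Hcarr ideal.axioms(1))
lemma id_fadd: "f \<in> J \<Longrightarrow> g \<in> J \<Longrightarrow> fadd f g \<in> J"
  using J additive_subgroup.a_closed[OF ideal.axioms(1)[OF J]] by (simp add: fa_simps)
lemma id_fm_left: "x \<in> FC \<Longrightarrow> f \<in> J \<Longrightarrow> fm x f \<in> J"
  using ideal.I_l_closed[OF J] by (simp add: fa_simps)
lemma id_fm_right: "x \<in> FC \<Longrightarrow> f \<in> J \<Longrightarrow> fm f x \<in> J"
  using ideal.I_r_closed[OF J] by (simp add: fa_simps)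
lemma id_fsc: "f \<in> J \<Longrightarrow> fsc c f \<in> J"
  by (subst fsc_as_fm) (intro id_fm_left FC_fsc FC_wd)
lemma id_fzero: "fzero \<in> J"
  using additive_subgroup.zero_closed[OF ideal.axioms(1)[OF J]] by (simp add: fa_simps)
lemma id_fsub: "f \<in> J \<Longrightarrow> g \<in> J \<Longrightarrow> fsub f g \<in> J"
proof -
  assume a: "f \<in> J" "g \<in> J"
  have "fsub f g = fadd f (fsc (-1) g)" by (simp add: fun_eq_iff fapp)
  then show ?thesis using a by (simp add: id_fadd id_fsc)
qed
lemma id_fsum: "(\<And>i. i \<in> A \<Longrightarrow> F i \<in> J) \<Longrightarrow> fsum F A \<in> J"
proof (induction A rule: infinite_finite_induct)
  case (infinite A)
  then show ?case using id_fzero by (simp add: fsum_def fzero_def)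
next
  case empty then show ?case using id_fzero by (simp add: fsum_def fzero_def)
next
  case (insert a A) then show ?case by (simp add: fsum_insert id_fadd)
qed

lemma q_mem: "f \<in> FC \<Longrightarrow> g \<in> FC \<Longrightarrow> g \<in> J +>\<^bsub>free_alg\<^esub> f \<longleftrightarrow> fsub g f \<in> J"
proof -
  assume fg: "f \<in> FC" "g \<in> FC"
  interpret JI: ideal J free_alg by (rule J)
  show ?thesis using JI.a_rcos_module_minus[OF ring_fa fg] fg by (simp add: fa_minus)
qed

lemma q_eq: "f \<in> FC \<Longrightarrow> g \<in> FC \<Longrightarrow> J +>\<^bsub>free_alg\<^esub> f = J +>\<^bsub>free_alg\<^esub> g \<longleftrightarrow> fsub f g \<in> J"
proof -
  assume fg: "f \<in> FC" "g \<in> FC"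
  interpret JI: ideal J free_alg by (rule J)
  show ?thesis
  proof
    assume "J +>\<^bsub>free_alg\<^esub> f = J +>\<^bsub>free_alg\<^esub> g"
    then have "f \<in> J +>\<^bsub>free_alg\<^esub> g" using JI.a_rcos_self[of f] fg by simp
    then show "fsub f g \<in> J" using q_mem fg by blast
  next
    assume "fsub f g \<in> J"
    then have "f \<in> J +>\<^bsub>free_alg\<^esub> g" using q_mem fg by blast
    then show "J +>\<^bsub>free_alg\<^esub> f = J +>\<^bsub>free_alg\<^esub> g"
      using JI.a_repr_independence'[of f g] fg by simp
  qed
qed

lemma q_carrier: "X \<in> carrier (free_alg Quot J) \<longleftrightarrow> (\<exists>f\<in>FC. X = J +>\<^bsub>free_alg\<^esub> f)"
  by (auto simp: FactRing_def A_RCOSETS_def')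

lemma q_mult: "f \<in> FC \<Longrightarrow> g \<in> FC \<Longrightarrow>
  (J +>\<^bsub>free_alg\<^esub> f) \<otimes>\<^bsub>free_alg Quot J\<^esub> (J +>\<^bsub>free_alg\<^esub> g) = J +>\<^bsub>free_alg\<^esub> fm f g"
proof -
  assume fg: "f \<in> FC" "g \<in> FC"
  interpret JI: ideal J free_alg by (rule J)
  show ?thesis using JI.rcoset_mult_add[OF fg] by (simp add: FactRing_def fa_simps)
qed

lemma q_add: "f \<in> FC \<Longrightarrow> g \<in> FC \<Longrightarrow>
  (J +>\<^bsub>free_alg\<^esub> f) \<oplus>\<^bsub>free_alg Quot J\<^esub> (J +>\<^bsub>free_alg\<^esub> g) = J +>\<^bsub>free_alg\<^esub> fadd f g"
proof -
  assume fg: "f \<in> FC" "g \<in> FC"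
  interpret JI: ideal J free_alg by (rule J)
  show ?thesis using JI.a_rcos_sum[OF fg] by (simp add: FactRing_def fa_simps)
qed

lemma q_one: "\<one>\<^bsub>free_alg Quot J\<^esub> = J +>\<^bsub>free_alg\<^esub> wd []"
  by (simp add: FactRing_def fa_simps)

lemma q_zero: "\<zero>\<^bsub>free_alg Quot J\<^esub> = J"
  by (simp add: FactRing_def)

lemma q_zero_iff: "f \<in> FC \<Longrightarrow> J +>\<^bsub>free_alg\<^esub> f = J \<longleftrightarrow> f \<in> J"
proof -
  assume f: "f \<in> FC"
  interpret JI: ideal J free_alg by (rule J)
  have "J = J +>\<^bsub>free_alg\<^esub> fzero" using JI.a_rcos_const[OF id_fzero] by simp
  moreover have "fsub f fzero = f" by (simp add: fun_eq_iff fapp)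
  ultimately show ?thesis using q_eq[OF f FC_fzero] by simp
qed

end


section \<open>Substitution homomorphisms\<close>

definition wp :: "('v \<Rightarrow> 'u list \<Rightarrow> 'k::field) \<Rightarrow> 'v list \<Rightarrow> 'u list \<Rightarrow> 'k" where
  "wp g w = foldr (\<lambda>v acc. fm (g v) acc) w (wd [])"

definition subst :: "('v \<Rightarrow> 'u list \<Rightarrow> 'k::field) \<Rightarrow> ('v list \<Rightarrow> 'k) \<Rightarrow> 'u list \<Rightarrow> 'k" where
  "subst g f = fsum (\<lambda>w. fsc (f w) (wp g w)) {w. f w \<noteq> 0}"

lemma wp_Nil[simp]: "wp g [] = wd []" by (simp add: wp_def)
lemma wp_Cons: "wp g (v#w) = fm (g v) (wp g w)" by (simp add: wp_def)
lemma wp_single[simp]: "wp g [v] = g v" by (simp add: wp_Cons)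
lemma wp_FC[intro]: "(\<And>v. g v \<in> FC) \<Longrightarrow> wp g w \<in> FC"
  by (induction w) (auto simp: wp_Cons)
lemma wp_append: "wp g (u@v) = fm (wp g u) (wp g v)"
  by (induction u) (simp_all add: wp_Cons fm_assoc)

lemma subst_eq: "finite A \<Longrightarrow> {w. f w \<noteq> 0} \<subseteq> A \<Longrightarrow>
  subst g f = fsum (\<lambda>w. fsc (f w) (wp g w)) A"
  unfolding subst_def fun_eq_iff fapp by (auto intro!: sum.mono_neutral_left)

lemma subst_FC[intro]: "(\<And>v. g v \<in> FC) \<Longrightarrow> subst g f \<in> FC"
  unfolding subst_def by (intro FC_fsum FC_fsc wp_FC)

lemma subst_fadd: "f \<in> FC \<Longrightarrow> h \<in> FC \<Longrightarrow> subst g (fadd f h) = fadd (subst g f) (subst g h)"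
proof -
  assume f: "f \<in> FC" and h: "h \<in> FC"
  let ?A = "{w. f w \<noteq> 0} \<union> {w. h w \<noteq> 0}"
  have A: "finite ?A" using f h by (simp add: FC_iff)
  show ?thesis
    by (subst (1 2 3) subst_eq[OF A]) (auto simp: fapp fun_eq_iff distrib_right sum.distrib)
qed

lemma subst_fsc: "f \<in> FC \<Longrightarrow> subst g (fsc c f) = fsc c (subst g f)"
proof -
  assume f: "f \<in> FC"
  let ?A = "{w. f w \<noteq> 0}"
  have A: "finite ?A" using f by (simp add: FC_iff)
  show ?thesis
    by (subst (1 2) subst_eq[OF A]) (auto simp: fapp fun_eq_iff sum_distrib_left mult.assoc)
qed

lemma subst_fsub: "f \<in> FC \<Longrightarrow> h \<in> FC \<Longrightarrow> subst g (fsub f h) = fsub (subst g f) (subst g h)"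
proof -
  assume f: "f \<in> FC" and h: "h \<in> FC"
  have e: "fsub f h = fadd f (fsc (-1) h)" by (simp add: fun_eq_iff fapp)
  have "subst g (fadd f (fsc (-1) h)) = fadd (subst g f) (fsc (-1) (subst g h))"
    using f h by (simp add: subst_fadd subst_fsc FC_fsc)
  then show ?thesis unfolding e by (simp add: fun_eq_iff fapp)
qed

lemma subst_fzero[simp]: "subst g fzero = fzero"
  by (simp add: subst_def fzero_def fsum_def)

lemma subst_wd[simp]: "subst g (wd u) = wp g u"
proof -
  have "subst g (wd u) = fsum (\<lambda>w. fsc (wd u w) (wp g w)) {u}"
    by (rule subst_eq) (auto simp: wd_app)
  then show ?thesis by (simp add: fun_eq_iff fapp wd_app)
qed

lemma subst_fsum: "(\<And>i. i \<in> A \<Longrightarrow> F i \<in> FC) \<Longrightarrow> subst g (fsum F A) = fsum (\<lambda>i. subst g (F i)) A"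
proof (induction A rule: infinite_finite_induct)
  case (infinite A) then show ?case by (simp add: fsum_def flip: fzero_def)
next
  case empty then show ?case by (simp add: fsum_def flip: fzero_def)
next
  case (insert a A) then show ?case by (simp add: fsum_insert subst_fadd FC_fsum)
qed

lemma subst_fm_wd: "h \<in> FC \<Longrightarrow> subst g (fm (wd u) h) = fm (wp g u) (subst g h)"
proof (induction h rule: fa_induct)
  case zero then show ?case by simp
next
  case (add a b) then show ?case by (simp add: fm_fadd_right subst_fadd FC_fm FC_wd)
next
  case (sc c a) then show ?case by (simp add: fm_fsc_right subst_fsc FC_fm FC_wd)
next
  case (wd w) then show ?case by (simp add: fm_wd_wd wp_append)
qed

lemma subst_fm: "f \<in> FC \<Longrightarrow> h \<in> FC \<Longrightarrow> subst g (fm f h) = fm (subst g f) (subst g h)"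
proof (induction f rule: fa_induct)
  case zero then show ?case by simp
next
  case (add a b) then show ?case by (simp add: fm_fadd_left subst_fadd FC_fm)
next
  case (sc c a) then show ?case by (simp add: fm_fsc_left subst_fsc FC_fm)
next
  case (wd w) then show ?case by (simp add: subst_fm_wd)
qed

lemma subst_hom: "(\<And>v. g v \<in> FC) \<Longrightarrow> subst g \<in> ring_hom free_alg free_alg"
  by (rule ring_hom_memI) (auto simp: fa_simps subst_fm subst_fadd)

lemma ringhom_subst: "(\<And>v. g v \<in> FC) \<Longrightarrow> ring_hom_ring free_alg free_alg (subst g)"
  by (intro ring_hom_ringI2 ring_fa subst_hom)

section \<open>Polynomial evaluation\<close>

definition fpow :: "('v list \<Rightarrow> 'k::field) \<Rightarrow> nat \<Rightarrow> 'v list \<Rightarrow> 'k" where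
  "fpow X n = (fm X ^^ n) (wd [])"

lemma fpow_0[simp]: "fpow X 0 = wd []" by (simp add: fpow_def)
lemma fpow_Suc: "fpow X (Suc n) = fm X (fpow X n)" by (simp add: fpow_def)
lemma fpow_FC[intro]: "X \<in> FC \<Longrightarrow> fpow X n \<in> FC" by (induction n) (auto simp: fpow_Suc)
lemma fpow_add: "fpow X (m + n) = fm (fpow X m) (fpow X n)"
  by (induction m) (simp_all add: fpow_Suc fm_assoc)
lemma fpow_1[simp]: "fpow X 1 = X" by (simp add: fpow_Suc)
lemma wp_replicate: "wp g (replicate n v) = fpow (g v) n"
  by (induction n) (simp_all add: wp_Cons fpow_Suc)
lemma wd_replicate': "(fpow (wd [v]) n :: 'v list \<Rightarrow> 'k::field) = wd (replicate n v)"
  by (induction n) (simp_all add: fpow_Suc fm_wd_wd)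
lemma wd_replicate: "wd (replicate n v) = (fpow (wd [v]) n :: 'v list \<Rightarrow> 'k::field)"
  by (simp add: wd_replicate')
lemma subst_fpow: "(\<And>v. g v \<in> FC) \<Longrightarrow> X \<in> FC \<Longrightarrow> subst g (fpow X n) = fpow (subst g X) n"
  by (induction n) (simp_all add: fpow_Suc subst_fm fpow_FC)

definition ev :: "('v list \<Rightarrow> 'k::field) \<Rightarrow> 'k poly \<Rightarrow> 'v list \<Rightarrow> 'k" where
  "ev X P = fsum (\<lambda>n. fsc (coeff P n) (fpow X n)) {n. coeff P n \<noteq> 0}"

lemma coeff_supp_fin: "finite {n. coeff P n \<noteq> 0}"
  by (rule finite_subset[of _ "{..degree P}"]) (auto intro: le_degree)

lemma ev_eq: "finite A \<Longrightarrow> {n. coeff P n \<noteq> 0} \<subseteq> A \<Longrightarrow>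
   ev X P = fsum (\<lambda>n. fsc (coeff P n) (fpow X n)) A"
  unfolding ev_def fun_eq_iff fapp by (auto intro!: sum.mono_neutral_left)

lemma ev_eq': "ev X P = fsum (\<lambda>n. fsc (coeff P n) (fpow X n)) {..degree P}"
  by (rule ev_eq) (auto intro: le_degree)

lemma ev_FC[intro]: "X \<in> FC \<Longrightarrow> ev X P \<in> FC"
  unfolding ev_def by (intro FC_fsum FC_fsc fpow_FC)

lemma ev_0[simp]: "ev X 0 = fzero" by (simp add: ev_def fsum_def fzero_def)

lemma ev_add: "ev X (P + Q) = fadd (ev X P) (ev X Q)"
proof -
  let ?A = "{n. coeff P n \<noteq> 0} \<union> {n. coeff Q n \<noteq> 0}"
  have A: "finite ?A" by (simp add: coeff_supp_fin)
  show ?thesis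
    by (subst (1 2 3) ev_eq[OF A]) (auto simp: fapp fun_eq_iff distrib_right sum.distrib)
qed

lemma ev_smult: "ev X (smult a P) = fsc a (ev X P)"
proof -
  let ?A = "{n. coeff P n \<noteq> 0}"
  have A: "finite ?A" by (simp add: coeff_supp_fin)
  show ?thesis
    by (subst (1 2) ev_eq[OF A]) (auto simp: fapp fun_eq_iff sum_distrib_left mult.assoc)
qed

lemma ev_pCons: "ev X (pCons a P) = fadd (fsc a (wd [])) (fm X (ev X P))"
proof -
  let ?A = "{..Suc (degree P)}"
  have "ev X (pCons a P) = fsum (\<lambda>n. fsc (coeff (pCons a P) n) (fpow X n)) ?A"
    by (rule ev_eq) (auto simp: coeff_pCons' split: if_splits dest!: le_degree)
  also have "\<dots> = fadd (fsc a (wd [])) (fsum (\<lambda>n. fsc (coeff P n) (fpow X (Suc n))) {..degree P})"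
    by (simp add: fun_eq_iff fapp sum.atMost_Suc_shift del: sum.atMost_Suc)
  also have "\<dots> = fadd (fsc a (wd [])) (fm X (ev X P))"
    by (simp add: ev_eq' fm_fsum_right fm_fsc_right fpow_Suc)
  finally show ?thesis .
qed

lemma ev_mult: "X \<in> FC \<Longrightarrow> ev X (P * Q) = fm (ev X P) (ev X Q)"
proof (induction P)
  case 0 then show ?case by simp
next
  case (pCons a P)
  show ?case
    by (simp add: ev_add ev_smult ev_pCons pCons fm_fadd_left fm_fsc_left fm_assoc)
qed

lemma ev_const: "ev X [:a:] = fsc a (wd [])"
  by (simp add: ev_pCons fun_eq_iff fapp)
lemma ev_1[simp]: "ev X 1 = wd []"
  by (simp add: one_pCons ev_const fun_eq_iff fapp)
lemma ev_x: "ev X [:0,1:] = X"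
  by (simp add: ev_pCons ev_const fun_eq_iff fapp)
lemma ev_diff: "ev X (P - Q) = fsub (ev X P) (ev X Q)"
proof -
  have e: "P - Q = P + smult (-1) Q" by simp
  have "ev X (P + smult (-1) Q) = fadd (ev X P) (fsc (-1) (ev X Q))" by (simp only: ev_add ev_smult)
  then show ?thesis unfolding e[symmetric] by (simp add: fun_eq_iff fapp)
qed
lemma ev_power: "X \<in> FC \<Longrightarrow> ev X (P ^ n) = fpow (ev X P) n"
  by (induction n) (simp_all add: ev_mult fpow_Suc)
lemma ev_sum: "ev X (\<Sum>i\<in>A. P i) = fsum (\<lambda>i. ev X (P i)) A"
proof (induction A rule: infinite_finite_induct)
  case (infinite A) then show ?case by (simp add: fsum_def flip: fzero_def)
next
  case empty then show ?case by (simp add: fsum_def flip: fzero_def)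
next
  case (insert a A) then show ?case by (simp add: fsum_insert ev_add)
qed

lemma subst_ev: "(\<And>v. g v \<in> FC) \<Longrightarrow> X \<in> FC \<Longrightarrow> subst g (ev X P) = ev (subst g X) P"
proof (induction P)
  case 0 then show ?case by simp
next
  case (pCons a P)
  have 1: "fsc a (wd []) \<in> FC" "fm X (ev X P) \<in> FC" "ev X P \<in> FC" "wd [] \<in> FC"
    using pCons by auto
  show ?case
    by (simp add: ev_pCons subst_fadd[OF 1(1,2)] subst_fsc[OF 1(4)] subst_fm[OF pCons(4) 1(3)] pCons)
qed


lemma frob:
  fixes a b :: "'a::comm_ring_1"
  assumes p: "prime p" and c: "CHAR('a) = p"
  shows "(a + b) ^ p = a ^ p + b ^ p"
proof -
  have p0: "p > 0" using p prime_gt_0_nat by blast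
  have z: "of_nat (p choose k) = (0::'a)" if "0 < k" "k < p" for k
    using that p c by (simp add: of_nat_eq_0_iff_char_dvd dvd_choose_prime)
  have "(a + b) ^ p = (\<Sum>k\<le>p. of_nat (p choose k) * a ^ k * b ^ (p - k))"
    by (rule binomial_ring)
  also have "\<dots> = (\<Sum>k\<in>{0, p}. of_nat (p choose k) * a ^ k * b ^ (p - k))"
    by (rule sum.mono_neutral_right) (use z in auto)
  also have "\<dots> = a ^ p + b ^ p" using p0 by simp
  finally show ?thesis .
qed

lemma prime_subfield_fermat:
  assumes p: "prime p" and c: "CHAR('k::field) = p" and x: "x \<in> prime_subfield p"
  shows "x ^ p = (x::'k)"
proof -
  obtain i where x: "x = of_nat i" using x by (auto simp: prime_subfield_def)
  have "(of_nat i :: 'k) ^ p = of_nat i" for i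
  proof (induction i)
    case 0 then show ?case using p prime_gt_0_nat by simp
  next
    case (Suc i)
    have "(of_nat (Suc i) :: 'k) ^ p = (of_nat i + 1) ^ p" by (simp add: add.commute)
    also have "\<dots> = of_nat i ^ p + 1 ^ p" by (rule frob[OF p c])
    finally show ?case using Suc by simp
  qed
  then show ?thesis using x by simp
qed

lemma prime_subfield_card:
  assumes p: "prime p" and c: "CHAR('k::field) = p"
  shows "finite (prime_subfield p :: 'k set)" "card (prime_subfield p :: 'k set) = p"
proof -
  have eq: "(prime_subfield p :: 'k set) = of_nat ` {..<p}" by (auto simp: prime_subfield_def)
  have "inj_on (of_nat :: nat \<Rightarrow> 'k) {..<p}"
  proof (rule inj_onI)
    fix i j assume ij: "i \<in> {..<p}" "j \<in> {..<p}" "(of_nat i :: 'k) = of_nat j"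
    show "i = j"
    proof (rule ccontr)
      assume "i \<noteq> j"
      then consider "i < j" | "j < i" by linarith
      then show False
      proof cases
        case 1
        then have "(of_nat (j - i) :: 'k) = 0" using ij(3) by (simp add: of_nat_diff)
        then have "p dvd (j - i)" using c by (simp add: of_nat_eq_0_iff_char_dvd)
        then show False using 1 ij by (auto dest: dvd_imp_le)
      next
        case 2
        then have "(of_nat (i - j) :: 'k) = 0" using ij(3) by (simp add: of_nat_diff)
        then have "p dvd (i - j)" using c by (simp add: of_nat_eq_0_iff_char_dvd)
        then show False using 2 ij by (auto dest: dvd_imp_le)
      qed
    qed
  qed
  then show "finite (prime_subfield p :: 'k set)" "card (prime_subfield p :: 'k set) = p"
    unfolding eq by (auto simp: card_image)
qed

lemma prime_subfield_closed:
  "prime p \<Longrightarrow> x \<in> prime_subfield p \<Longrightarrow> y \<in> prime_subfield p \<Longrightarrow> x \<noteq> y \<Longrightarrow> True" by simp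

definition Zp :: "nat \<Rightarrow> 'k::field poly" where "Zp p = (\<Prod>j\<in>prime_subfield p. [:-j, 1:])"

definition Lag :: "nat \<Rightarrow> 'k::field \<Rightarrow> 'k poly" where
  "Lag p i = smult (inverse (\<Prod>j\<in>prime_subfield p - {i}. (i - j))) (\<Prod>j\<in>prime_subfield p - {i}. [:-j, 1:])"

context
  fixes p :: nat
  assumes p: "prime p" and c: "CHAR('k::field) = p"
begin

abbreviation "FF \<equiv> (prime_subfield p :: 'k set)"

lemma FF_fin: "finite FF" using prime_subfield_card[OF p c] by simp
lemma FF_card: "card FF = p" using prime_subfield_card[OF p c] by simp

lemma Zp_eq: "(Zp p :: 'k poly) = [:0,1:] ^ p - [:0,1:]"
proof (rule poly_eqI_degree_lead_coeff[where n=p and A=FF])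
  have nz: "\<forall>j\<in>FF. [:-j, 1:] \<noteq> 0" by simp
  show dZ: "degree (Zp p :: 'k poly) \<le> p"
    unfolding Zp_def by (subst degree_prod_eq_sum_degree[OF nz]) (simp add: FF_card)
  have dZ: "degree (Zp p :: 'k poly) = p"
    unfolding Zp_def by (subst degree_prod_eq_sum_degree[OF nz]) (simp add: FF_card)
  have lZ: "lead_coeff (Zp p :: 'k poly) = 1"
    unfolding Zp_def by (simp add: lead_coeff_prod)
  have p2: "p \<ge> 2" using p prime_ge_2_nat by blast
  show "coeff (Zp p :: 'k poly) p = coeff ([:0,1:] ^ p - [:0,1:]) p"
    using dZ lZ p2 coeff_linear_power[of "0::'k" p] by (simp add: coeff_diff coeff_pCons')
  show "card FF \<ge> p" by (simp add: FF_card)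
  show "degree ([:0,1:] ^ p - [:0,1:] :: 'k poly) \<le> p"
    using p2 degree_power_le[of "[:0,1::'k:]" p] by (intro order.trans[OF degree_diff_le_max]) auto
  fix z assume z: "z \<in> FF"
  have "poly (Zp p) z = 0" unfolding Zp_def using z FF_fin by (simp add: poly_prod prod_zero_iff)
  moreover have "poly ([:0,1:] ^ p - [:0,1:]) z = 0" using prime_subfield_fermat[OF p c z] by simp
  ultimately show "poly (Zp p) z = poly ([:0,1:] ^ p - [:0,1:]) z" by simp
qed

lemma Lag_eval: "i \<in> FF \<Longrightarrow> j \<in> FF \<Longrightarrow> poly (Lag p i) j = (if j = i then 1 else 0)"
proof -
  assume i: "i \<in> FF" and j: "j \<in> FF"
  have fin: "finite (FF - {i})" using FF_fin by simp
  show ?thesis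
  proof (cases "j = i")
    case True
    have "(\<Prod>k\<in>FF - {i}. (i - k)) \<noteq> 0" using fin by (simp add: prod_zero_iff)
    then show ?thesis using True by (simp add: Lag_def poly_prod)
  next
    case False
    then have "(\<Prod>k\<in>FF - {i}. poly [:-k, 1:] j) = 0" using fin j by (simp add: prod_zero_iff)
    then show ?thesis using False by (simp add: Lag_def poly_prod)
  qed
qed

lemma Lag_degree: "degree (Lag p i :: 'k poly) \<le> p - 1" if i: "i \<in> FF"
proof -
  have "degree (\<Prod>j\<in>FF - {i}. [:-j, 1:]) \<le> (\<Sum>j\<in>FF - {i}. degree [:-j, 1:])"
    using FF_fin degree_prod_sum_le[of "FF - {i}" "\<lambda>j. [:-j, 1:]"] by (simp add: o_def)
  also have "\<dots> = p - 1" using FF_fin i by (simp add: FF_card)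
  finally show ?thesis by (simp add: Lag_def)
qed

lemma Lag_sum: "(\<Sum>i\<in>FF. Lag p i) = (1 :: 'k poly)"
proof (rule poly_eqI_degree[where A=FF])
  have p2: "p \<ge> 2" using p prime_ge_2_nat by blast
  fix x assume x: "x \<in> FF"
  have "poly (\<Sum>i\<in>FF. Lag p i) x = (\<Sum>i\<in>FF. if x = i then 1 else 0)"
    by (simp add: poly_sum Lag_eval x cong: sum.cong)
  also have "\<dots> = 1" using FF_fin x by simp
  finally show "poly (\<Sum>i\<in>FF. Lag p i) x = poly 1 x" by simp
next
  have p2: "p \<ge> 2" using p prime_ge_2_nat by blast
  have "degree (\<Sum>i\<in>FF. Lag p i) \<le> p - 1"
    apply (rule degree_sum_le) apply (rule FF_fin) using Lag_degree by simp
  then show "degree (\<Sum>i\<in>FF. Lag p i) < card FF" using p2 FF_card by simp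
  show "degree (1 :: 'k poly) < card FF" using p2 FF_card by simp
qed

lemma Lag_root: "i \<in> FF \<Longrightarrow> Lag p i * [:-i, 1:] = smult (inverse (\<Prod>j\<in>FF - {i}. (i - j))) ([:0,1:] ^ p - [:0,1:])"
proof -
  assume i: "i \<in> FF"
  have "(\<Prod>j\<in>FF - {i}. [:-j, 1:]) * [:-i, 1:] = Zp p"
    unfolding Zp_def using FF_fin i by (simp add: prod.remove mult.commute)
  then show ?thesis unfolding Lag_def mult_smult_left Zp_eq by simp
qed

end


section \<open>Generators of the reduced ideals\<close>

lemma env_rels_FC: "env_rels sc br \<subseteq> FC"
proof
  fix r assume "r \<in> env_rels sc br"
  then show "r \<in> FC" unfolding env_rels_def
  proof (elim UnE CollectE exE conjE)
    fix a b assume r: "r = (\<lambda>w. wd [a + b] w - wd [a] w - wd [b] w)"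
    have "r = fsub (fsub (wd [a+b]) (wd [a])) (wd [b])" by (simp add: r fun_eq_iff fapp)
    then show "r \<in> FC" by auto
  next
    fix c a assume r: "r = (\<lambda>w. wd [sc c a] w - c * wd [a] w)"
    have "r = fsub (wd [sc c a]) (fsc c (wd [a]))" by (simp add: r fun_eq_iff fapp)
    then show "r \<in> FC" by auto
  next
    fix a b assume r: "r = (\<lambda>w. wd [a, b] w - wd [b, a] w - wd [br a b] w)"
    have "r = fsub (fsub (wd [a, b]) (wd [b, a])) (wd [br a b])" by (simp add: r fun_eq_iff fapp)
    then show "r \<in> FC" by auto
  qed
qed

lemma red_rels_FC: "red_rels pm p \<xi> \<subseteq> FC"
proof
  fix r assume "r \<in> red_rels pm p \<xi>"
  then obtain x where r: "r = (\<lambda>w. wd (replicate p x) w - wd [pm x] w - (\<xi> x) ^ p * wd [] w)"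
    by (auto simp: red_rels_def)
  have "r = fsub (fsub (wd (replicate p x)) (wd [pm x])) (fsc ((\<xi> x) ^ p) (wd []))"
    by (simp add: r fun_eq_iff fapp)
  then show "r \<in> FC" by auto
qed

lemma red_ideal_ideal: "ideal (red_ideal sc br pm p \<xi>) free_alg"
  unfolding red_ideal_def
  by (rule ring.genideal_ideal[OF ring_fa], intro Un_least env_rels_FC red_rels_FC)

lemma red_gens: "env_rels sc br \<union> red_rels pm p \<xi> \<subseteq> red_ideal sc br pm p \<xi>"
  unfolding red_ideal_def
  by (rule ring.genideal_self[OF ring_fa], intro Un_least env_rels_FC red_rels_FC)

lemma red_ideal_minimal:
  assumes "ideal J free_alg" "env_rels sc br \<union> red_rels pm p \<xi> \<subseteq> J"
  shows "red_ideal sc br pm p \<xi> \<subseteq> J"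
  unfolding red_ideal_def by (rule ring.genideal_minimal[OF ring_fa assms])

lemma r_lin: "fsub (fsub (wd [a+b]) (wd [a])) (wd [b]) \<in> red_ideal sc br pm p \<xi>"
proof -
  have "(\<lambda>w. wd [a + b] w - wd [a] w - wd [b] w) \<in> env_rels sc br" unfolding env_rels_def by blast
  then have m: "(\<lambda>w. wd [a + b] w - wd [a] w - wd [b] w) \<in> red_ideal sc br pm p \<xi>"
    using red_gens[of sc br pm p \<xi>] by blast
  have eq: "fsub (fsub (wd [a+b]) (wd [a])) (wd [b]) = (\<lambda>w. wd [a + b] w - wd [a] w - wd [b] w)"
    by (simp add: fun_eq_iff fapp)
  show ?thesis unfolding eq by (rule m)
qed

lemma r_sc: "fsub (wd [sc c a]) (fsc c (wd [a])) \<in> red_ideal sc br pm p \<xi>"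
proof -
  have "(\<lambda>w. wd [sc c a] w - c * wd [a] w) \<in> env_rels sc br" unfolding env_rels_def by blast
  moreover have "(\<lambda>w. wd [sc c a] w - c * wd [a] w) = fsub (wd [sc c a]) (fsc c (wd [a]))"
    by (simp add: fun_eq_iff fapp)
  ultimately show ?thesis using red_gens[of sc br pm p \<xi>] by auto
qed

lemma r_br: "fsub (fsub (wd [a, b]) (wd [b, a])) (wd [br a b]) \<in> red_ideal sc br pm p \<xi>"
proof -
  have "(\<lambda>w. wd [a, b] w - wd [b, a] w - wd [br a b] w) \<in> env_rels sc br" unfolding env_rels_def by blast
  then have m: "(\<lambda>w. wd [a, b] w - wd [b, a] w - wd [br a b] w) \<in> red_ideal sc br pm p \<xi>"
    using red_gens[of sc br pm p \<xi>] by blast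
  have eq: "fsub (fsub (wd [a, b]) (wd [b, a])) (wd [br a b]) = (\<lambda>w. wd [a, b] w - wd [b, a] w - wd [br a b] w)"
    by (simp add: fun_eq_iff fapp)
  show ?thesis unfolding eq by (rule m)
qed

lemma r_red: "fsub (fsub (wd (replicate p x)) (wd [pm x])) (fsc ((\<xi> x) ^ p) (wd [])) \<in> red_ideal sc br pm p \<xi>"
proof -
  have "(\<lambda>w. wd (replicate p x) w - wd [pm x] w - (\<xi> x) ^ p * wd [] w) \<in> red_rels pm p \<xi>"
    unfolding red_rels_def by blast
  moreover have "(\<lambda>w. wd (replicate p x) w - wd [pm x] w - (\<xi> x) ^ p * wd [] w)
      = fsub (fsub (wd (replicate p x)) (wd [pm x])) (fsc ((\<xi> x) ^ p) (wd []))"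
    by (simp add: fun_eq_iff fapp)
  ultimately show ?thesis using red_gens[of sc br pm p \<xi>] by auto
qed

lemma r_zero: "wd [0] \<in> red_ideal sc br pm p \<xi>"
proof -
  have "fsc (-1) (fsub (fsub (wd [0+0]) (wd [0])) (wd [0])) \<in> red_ideal sc br pm p \<xi>"
    by (rule id_fsc[OF red_ideal_ideal r_lin])
  moreover have "fsc (-1) (fsub (fsub (wd [0+0]) (wd [0])) (wd [0])) = (wd [0] :: 'a list \<Rightarrow> 'b)"
    by (simp add: fun_eq_iff fapp)
  ultimately show ?thesis by simp
qed

section \<open>Central elements modulo an ideal\<close>

definition cen :: "('v list \<Rightarrow> 'k::field) set \<Rightarrow> ('v list \<Rightarrow> 'k) \<Rightarrow> bool" where
  "cen J x \<longleftrightarrow> x \<in> FC \<and> (\<forall>h\<in>FC. fsub (fm x h) (fm h x) \<in> J)"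

lemma comm_split: "fsub (fm x (fm V W)) (fm (fm V W) x) =
   fadd (fm (fsub (fm x V) (fm V x)) W) (fm V (fsub (fm x W) (fm W x)))"
  by (simp add: fm_fsub_left fm_fsub_right fm_assoc fun_eq_iff fapp)

context
  fixes J :: "('v list \<Rightarrow> 'k::field) set"
  assumes J: "ideal J free_alg"
begin

lemma cen_intro:
  assumes x: "x \<in> FC" and l: "\<And>v. fsub (fm x (wd [v])) (fm (wd [v]) x) \<in> J"
  shows "cen J x"
  unfolding cen_def
proof (intro conjI ballI x)
  have w: "fsub (fm x (wd w)) (fm (wd w) x) \<in> J" for w
  proof (induction w)
    case Nil then show ?case using id_fzero[OF J] by (simp add: fun_eq_iff fapp fzero_def)
  next
    case (Cons v w)
    have e: "wd (v#w) = fm (wd [v]) (wd w)" by (simp add: fm_wd_wd)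
    show ?case unfolding e comm_split
      by (intro id_fadd[OF J] id_fm_right[OF J] id_fm_left[OF J] FC_wd Cons l)
  qed
  fix h :: "'v list \<Rightarrow> 'k" assume "h \<in> FC"
  then show "fsub (fm x h) (fm h x) \<in> J"
  proof (induction h rule: fa_induct)
    case zero then show ?case using id_fzero[OF J] by simp
  next
    case (add g h)
    have "fsub (fm x (fadd g h)) (fm (fadd g h) x) = fadd (fsub (fm x g) (fm g x)) (fsub (fm x h) (fm h x))"
      by (simp add: fm_fadd_left fm_fadd_right fun_eq_iff fapp)
    then show ?case using add id_fadd[OF J] by simp
  next
    case (sc c g)
    have "fsub (fm x (fsc c g)) (fm (fsc c g) x) = fsc c (fsub (fm x g) (fm g x))"
      by (simp add: fm_fsc_left fm_fsc_right fun_eq_iff fapp algebra_simps)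
    then show ?case using sc id_fsc[OF J] by simp
  next
    case (wd w) then show ?case by (rule w)
  qed
qed

lemma cenD: "cen J x \<Longrightarrow> h \<in> FC \<Longrightarrow> fsub (fm x h) (fm h x) \<in> J"
  by (simp add: cen_def)

lemma cen_one: "cen J (wd [])"
  by (rule cen_intro) (use id_fzero[OF J] in \<open>auto simp: fun_eq_iff fapp fzero_def\<close>)

lemma cen_fadd: "cen J x \<Longrightarrow> cen J y \<Longrightarrow> cen J (fadd x y)"
proof -
  assume x: "cen J x" and y: "cen J y"
  have "fsub (fm (fadd x y) h) (fm h (fadd x y)) = fadd (fsub (fm x h) (fm h x)) (fsub (fm y h) (fm h y))" for h
    by (simp add: fm_fadd_left fm_fadd_right fun_eq_iff fapp)
  then show ?thesis using x y unfolding cen_def by (auto intro: id_fadd[OF J])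
qed

lemma cen_fsc: "cen J x \<Longrightarrow> cen J (fsc c x)"
proof -
  assume x: "cen J x"
  have "fsub (fm (fsc c x) h) (fm h (fsc c x)) = fsc c (fsub (fm x h) (fm h x))" for h
    by (simp add: fm_fsc_left fm_fsc_right fun_eq_iff fapp algebra_simps)
  then show ?thesis using x unfolding cen_def by (auto intro: id_fsc[OF J])
qed

lemma cen_fm: "cen J x \<Longrightarrow> cen J y \<Longrightarrow> cen J (fm x y)"
proof -
  assume x: "cen J x" and y: "cen J y"
  have "fsub (fm (fm x y) h) (fm h (fm x y)) =
     fadd (fm x (fsub (fm y h) (fm h y))) (fm (fsub (fm x h) (fm h x)) y)" for h
    by (simp add: fm_fsub_left fm_fsub_right fm_assoc fun_eq_iff fapp)
  note eq = this
  show ?thesis unfolding cen_def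
  proof (intro conjI ballI)
    show "fm x y \<in> FC" using x y by (auto simp: cen_def)
    fix h :: "'v list \<Rightarrow> 'k" assume h: "h \<in> FC"
    show "fsub (fm (fm x y) h) (fm h (fm x y)) \<in> J" unfolding eq
      by (intro id_fadd[OF J] id_fm_left[OF J] id_fm_right[OF J]) (use x y h in \<open>auto simp: cen_def\<close>)
  qed
qed

lemma cen_ev: "cen J x \<Longrightarrow> cen J (ev x P)"
proof (induction P)
  case 0
  have "cen J (fsc 0 (wd []))" by (rule cen_fsc[OF cen_one])
  then show ?case by simp
next
  case (pCons a P)
  then show ?case by (simp add: ev_pCons cen_fadd cen_fsc cen_one cen_fm)
qed

end

lemma ev_congr_aux: "fsub (fadd (fsc b (wd [])) (fm (fadd Z (fsc a (wd []))) E)) (fsc (b + a * q) (wd []))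
   = fadd (fm (fadd Z (fsc a (wd []))) (fsub E (fsc q (wd [])))) (fsc q Z)"
  by (simp add: fm_fadd_left fm_fsc_left fm_fsub_right fm_fsc_right fun_eq_iff fapp algebra_simps)

lemma ev_congr:
  assumes J: "ideal J free_alg" and Z: "Z \<in> J"
  shows "fsub (ev (fadd Z (fsc a (wd []))) P) (fsc (poly P a) (wd [])) \<in> J"
proof (induction P)
  case 0 then show ?case using id_fzero[OF J] by simp
next
  case (pCons b P)
  let ?X = "fadd Z (fsc a (wd []))"
  let ?D = "fsub (ev ?X P) (fsc (poly P a) (wd []))"
  have Zc: "Z \<in> FC" by (rule id_sub[OF J Z])
  have "fsub (ev ?X (pCons b P)) (fsc (poly (pCons b P) a) (wd [])) =
      fadd (fm ?X ?D) (fsc (poly P a) Z)"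
    unfolding ev_pCons poly_pCons by (rule ev_congr_aux)
  moreover have "fm ?X ?D \<in> J" by (rule id_fm_left[OF J _ pCons(2)]) (use Zc in auto)
  ultimately show ?case using id_fadd[OF J] id_fsc[OF J Z] by simp
qed






declare FC_fm[simp] FC_fadd[simp] FC_fsub[simp] FC_fsc[simp] FC_wd[simp] FC_fzero[simp]

lemma lin0: "Vector_Spaces.linear s1 s2 f \<Longrightarrow> f 0 = 0"
  by (metis module_hom.zero module_hom_iff_linear)

lemma frob_fa:
  assumes p: "prime p" and c: "CHAR('k::field) = p" and X: "X \<in> FC"
  shows "fpow (fadd X (fsc s (wd []))) p = fadd (fpow X p) (fsc (s ^ p) (wd [] :: 'v list \<Rightarrow> 'k))"
proof -
  have "ev X [:s, 1:] = fadd (fsc s (wd [])) X" by (simp add: ev_pCons ev_const)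
  then have e1: "fadd X (fsc s (wd [])) = ev X [:s, 1:]" by (simp add: fun_eq_iff fapp add.commute)
  have "CHAR('k poly) = p" using c by simp
  then have f: "([:s:] + [:0,1:]) ^ p = [:s:] ^ p + [:0, 1:] ^ p" by (rule frob[OF p])
  have q: "[:s:] + [:0,1::'k:] = [:s, 1:]" by (simp only: add_pCons add.right_neutral add.left_neutral)
  have e2: "[:s, 1:] ^ p = [:s ^ p:] + [:0,1::'k:] ^ p" using f unfolding q poly_const_pow .
  have "fpow (fadd X (fsc s (wd []))) p = ev X ([:s, 1:] ^ p)" unfolding e1 by (rule ev_power[OF X, symmetric])
  also have "\<dots> = fadd (fsc (s ^ p) (wd [])) (fpow (ev X [:0,1:]) p)"
    unfolding e2 ev_add ev_const ev_power[OF X] ..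
  also have "\<dots> = fadd (fpow X p) (fsc (s ^ p) (wd []))"
    unfolding ev_x by (simp add: fun_eq_iff fapp add.commute)
  finally show ?thesis .
qed

locale LA =
  fixes sc :: "'k::field \<Rightarrow> 'l::ab_group_add \<Rightarrow> 'l"
    and br :: "'l \<Rightarrow> 'l \<Rightarrow> 'l"
    and pm :: "'l \<Rightarrow> 'l"
    and p :: nat
    and \<chi> :: "'l \<Rightarrow> 'k"
  assumes p: "prime p" and c: "CHAR('k) = p"
    and R: "restricted_lie_algebra sc br pm p"
    and chi: "Vector_Spaces.linear sc (*) \<chi>"
begin

lemma vs: "vector_space sc" using R by (simp add: restricted_lie_algebra_def lie_algebra_def)
lemma sc_zero_left[simp]: "sc 0 x = 0"
  using vs module.scale_zero_left module_iff_vector_space by metis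
lemma sc_zero_right[simp]: "sc a 0 = 0"
  using vs module.scale_zero_right module_iff_vector_space by metis
lemma br_zero[simp]: "br x 0 = 0"
proof -
  have "Vector_Spaces.linear sc sc (br x)" using R by (simp add: restricted_lie_algebra_def lie_algebra_def)
  then show ?thesis by (rule lin0)
qed
lemma p_pos: "p > 0" using p prime_gt_0_nat by blast
lemma pm_zero[simp]: "pm 0 = 0"
proof -
  have "\<forall>c x. pm (sc c x) = sc (c ^ p) (pm x)" using R by (simp add: restricted_lie_algebra_def)
  then have "pm (sc 0 0) = sc (0 ^ p) (pm 0)" by blast
  then show ?thesis using p_pos by (simp add: zero_power)
qed
lemma chi_zero[simp]: "\<chi> 0 = 0" using chi by (rule lin0)

definition "I1 = red_ideal (ext_scale sc) (ext_br br) (ext_pmap pm p \<chi>) p (\<lambda>_. 0)"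
definition "I2 j = red_ideal sc br pm p (\<lambda>x. j * \<chi> x)"
definition "cc = (wd [(0::'l, 1::'k)] :: ('l \<times> 'k) list \<Rightarrow> 'k)"
definition "g\<psi> j = (\<lambda>(x::'l, a::'k). fadd (wd [x]) (fsc (a * j) (wd [])) :: 'l list \<Rightarrow> 'k)"
definition "\<psi> j = subst (g\<psi> j)"
definition "\<theta> = subst (\<lambda>x::'l. wd [(x, 0::'k)])"
definition "E i = ev cc (Lag p i)"

lemma I1: "ideal I1 free_alg" unfolding I1_def by (rule red_ideal_ideal)
lemma I2: "ideal (I2 j) free_alg" unfolding I2_def by (rule red_ideal_ideal)
lemma cc_FC[simp]: "cc \<in> FC" by (simp add: cc_def FC_wd)
lemma g\<psi>_FC[simp]: "g\<psi> j v \<in> FC" by (cases v) (auto simp: g\<psi>_def)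
lemma \<psi>_FC[simp]: "\<psi> j f \<in> FC" unfolding \<psi>_def by (rule subst_FC) simp
lemma \<theta>_FC[simp]: "\<theta> f \<in> FC" unfolding \<theta>_def by (rule subst_FC) auto
lemma E_FC[simp]: "E i \<in> FC" unfolding E_def by (rule ev_FC) simp
lemma \<psi>_letter: "\<psi> j (wd [(x, a)]) = fadd (wd [x]) (fsc (a * j) (wd []))"
  by (simp add: \<psi>_def g\<psi>_def)
lemma \<theta>_letter: "\<theta> (wd [x]) = wd [(x, 0)]"
  by (simp add: \<theta>_def)
lemma \<psi>_hom: "ring_hom_ring free_alg free_alg (\<psi> j)"
  unfolding \<psi>_def by (rule ringhom_subst) simp
lemma \<psi>_fm: "f \<in> FC \<Longrightarrow> h \<in> FC \<Longrightarrow> \<psi> j (fm f h) = fm (\<psi> j f) (\<psi> j h)"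
  unfolding \<psi>_def by (rule subst_fm)
lemma \<psi>_fadd: "f \<in> FC \<Longrightarrow> h \<in> FC \<Longrightarrow> \<psi> j (fadd f h) = fadd (\<psi> j f) (\<psi> j h)"
  unfolding \<psi>_def by (rule subst_fadd)
lemma \<psi>_fsub: "f \<in> FC \<Longrightarrow> h \<in> FC \<Longrightarrow> \<psi> j (fsub f h) = fsub (\<psi> j f) (\<psi> j h)"
  unfolding \<psi>_def by (rule subst_fsub)
lemma \<psi>_fsc: "f \<in> FC \<Longrightarrow> \<psi> j (fsc a f) = fsc a (\<psi> j f)"
  unfolding \<psi>_def by (rule subst_fsc)
lemma \<theta>_fm: "f \<in> FC \<Longrightarrow> h \<in> FC \<Longrightarrow> \<theta> (fm f h) = fm (\<theta> f) (\<theta> h)"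
  unfolding \<theta>_def by (rule subst_fm)
lemma \<theta>_fadd: "f \<in> FC \<Longrightarrow> h \<in> FC \<Longrightarrow> \<theta> (fadd f h) = fadd (\<theta> f) (\<theta> h)"
  unfolding \<theta>_def by (rule subst_fadd)
lemma \<theta>_fsub: "f \<in> FC \<Longrightarrow> h \<in> FC \<Longrightarrow> \<theta> (fsub f h) = fsub (\<theta> f) (\<theta> h)"
  unfolding \<theta>_def by (rule subst_fsub)
lemma \<theta>_fsc: "f \<in> FC \<Longrightarrow> \<theta> (fsc a f) = fsc a (\<theta> f)"
  unfolding \<theta>_def by (rule subst_fsc)

lemma FF_fermat: "(j::'k) \<in> prime_subfield p \<Longrightarrow> j ^ p = j"
  by (rule prime_subfield_fermat[OF p c])

lemma \<psi>_gens:
  assumes j: "j \<in> prime_subfield p"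
  shows "env_rels (ext_scale sc) (ext_br br) \<union> red_rels (ext_pmap pm p \<chi>) p (\<lambda>_. 0)
     \<subseteq> {f \<in> FC. \<psi> j f \<in> I2 j}"
proof
  fix r assume r: "r \<in> env_rels (ext_scale sc) (ext_br br) \<union> red_rels (ext_pmap pm p \<chi>) p (\<lambda>_. 0)"
  have rFC: "r \<in> FC" using r env_rels_FC red_rels_FC by blast
  have "\<psi> j r \<in> I2 j" using r unfolding env_rels_def red_rels_def
  proof (elim UnE CollectE exE conjE)
    fix a b :: "'l \<times> 'k" assume r: "r = (\<lambda>w. wd [a + b] w - wd [a] w - wd [b] w)"
    obtain x u where a: "a = (x, u)" by fastforce
    obtain y v where b: "b = (y, v)" by fastforce
    have e: "r = fsub (fsub (wd [a+b]) (wd [a])) (wd [b])" by (simp add: r fun_eq_iff fapp)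
    have "\<psi> j (fsub (fsub (wd [a+b]) (wd [a])) (wd [b])) = fsub (fsub (wd [x+y]) (wd [x])) (wd [y])"
      by (simp add: \<psi>_fsub FC_fsub \<psi>_letter a b fun_eq_iff fapp algebra_simps)
    then have "\<psi> j r = fsub (fsub (wd [x+y]) (wd [x])) (wd [y])" using e by simp
    then show "\<psi> j r \<in> I2 j" by (simp add: I2_def r_lin)
  next
    fix t and a :: "'l \<times> 'k" assume r: "r = (\<lambda>w. wd [ext_scale sc t a] w - t * wd [a] w)"
    obtain x u where a: "a = (x, u)" by fastforce
    have e: "r = fsub (wd [ext_scale sc t a]) (fsc t (wd [a]))" by (simp add: r fun_eq_iff fapp)
    have "\<psi> j (fsub (wd [ext_scale sc t a]) (fsc t (wd [a]))) = fsub (wd [sc t x]) (fsc t (wd [x]))"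
      by (simp add: \<psi>_fsub \<psi>_fsc FC_fsc \<psi>_letter a ext_scale_def fun_eq_iff fapp algebra_simps)
    then have "\<psi> j r = fsub (wd [sc t x]) (fsc t (wd [x]))" using e by simp
    then show "\<psi> j r \<in> I2 j" by (simp add: I2_def r_sc)
  next
    fix a b :: "'l \<times> 'k" assume r: "r = (\<lambda>w. wd [a, b] w - wd [b, a] w - wd [ext_br br a b] w)"
    obtain x u where a: "a = (x, u)" by fastforce
    obtain y v where b: "b = (y, v)" by fastforce
    have wab: "wd [a, b] = fm (wd [a]) (wd [b])" "wd [b, a] = fm (wd [b]) (wd [a])"
      "wd [x, y] = fm (wd [x]) (wd [y])" "wd [y, x] = fm (wd [y]) (wd [x])"
      by (simp_all add: fm_wd_wd)
    have e: "r = fsub (fsub (fm (wd [a]) (wd [b])) (fm (wd [b]) (wd [a]))) (wd [ext_br br a b])"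
      by (simp add: r fun_eq_iff fapp wab)
    have "\<psi> j (fsub (fsub (fm (wd [a]) (wd [b])) (fm (wd [b]) (wd [a]))) (wd [ext_br br a b]))
       = fsub (fsub (wd [x, y]) (wd [y, x])) (wd [br x y])"
      by (simp add: \<psi>_fsub \<psi>_fm FC_fsub FC_fm \<psi>_letter a b ext_br_def wab
          fm_fadd_left fm_fadd_right fm_fsc_left fm_fsc_right fun_eq_iff fapp algebra_simps)
    then have "\<psi> j r = fsub (fsub (wd [x, y]) (wd [y, x])) (wd [br x y])" using e by simp
    then show "\<psi> j r \<in> I2 j" by (simp add: I2_def r_br)
  next
    fix a :: "'l \<times> 'k"
    assume r: "r = (\<lambda>w. wd (replicate p a) w - wd [ext_pmap pm p \<chi> a] w - 0 ^ p * wd [] w)"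
    obtain x u where a: "a = (x, u)" by fastforce
    have e: "r = fsub (wd (replicate p a)) (wd [ext_pmap pm p \<chi> a])" using p_pos
      by (simp add: r fun_eq_iff fapp)
    have r1: "\<psi> j (wd (replicate p (x, u))) = fadd (wd (replicate p x)) (fsc ((u * j) ^ p) (wd []))"
      by (simp add: \<psi>_def wp_replicate g\<psi>_def frob_fa[OF p c] wd_replicate')
    have "\<psi> j (fsub (wd (replicate p a)) (wd [ext_pmap pm p \<chi> a]))
       = fsub (fsub (wd (replicate p x)) (wd [pm x])) (fsc ((j * \<chi> x) ^ p) (wd []))"
      using FF_fermat[OF j]
      by (simp add: \<psi>_fsub r1 \<psi>_letter a ext_pmap_def wd_replicate' fun_eq_iff fapp algebra_simps power_mult_distrib)
    then have "\<psi> j r = fsub (fsub (wd (replicate p x)) (wd [pm x])) (fsc ((j * \<chi> x) ^ p) (wd []))"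
      using e by simp
    then show "\<psi> j r \<in> I2 j" using r_red[where sc=sc and br=br and pm=pm and p=p and \<xi>="\<lambda>x. j * \<chi> x" and x=x] by (simp add: I2_def)
  qed
  then show "r \<in> {f \<in> FC. \<psi> j f \<in> I2 j}" using rFC by simp
qed

lemma \<psi>_I1: "j \<in> prime_subfield p \<Longrightarrow> f \<in> I1 \<Longrightarrow> \<psi> j f \<in> I2 j"
proof -
  assume j: "j \<in> prime_subfield p" and f: "f \<in> I1"
  have "ideal {f \<in> FC. \<psi> j f \<in> I2 j} free_alg"
    using ring_hom_ring.ideal_vimage[OF \<psi>_hom I2] by simp
  then have "I1 \<subseteq> {f \<in> FC. \<psi> j f \<in> I2 j}"
    unfolding I1_def by (rule red_ideal_minimal) (rule \<psi>_gens[OF j])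
  then show ?thesis using f by blast
qed

end




context LA begin

lemma \<theta>_one[simp]: "\<theta> (wd []) = wd []" by (simp add: \<theta>_def)
lemma \<psi>_one[simp]: "\<psi> j (wd []) = wd []" by (simp add: \<psi>_def)

lemma cc_letter: "fsub (fm cc (wd [v])) (fm (wd [v]) cc) \<in> I1"
proof -
  have m: "fsub (fsub (wd [v, (0,1)]) (wd [(0,1), v])) (wd [ext_br br v (0,1)]) \<in> I1"
    unfolding I1_def by (rule r_br)
  have z: "wd [ext_br br v (0::'l,1::'k)] \<in> I1"
    using r_zero[where sc="ext_scale sc" and br="ext_br br" and pm="ext_pmap pm p \<chi>" and p=p and \<xi>="\<lambda>_. 0"]
    by (simp add: ext_br_def I1_def zero_prod_def)
  have "fsc (-1) (fadd (fsub (fsub (wd [v, (0,1)]) (wd [(0,1), v])) (wd [ext_br br v (0,1)])) (wd [ext_br br v (0,1)])) \<in> I1"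
    by (intro id_fsc[OF I1] id_fadd[OF I1] m z)
  moreover have "fsc (-1) (fadd (fsub (fsub (wd [v, (0,1)]) (wd [(0,1), v])) (wd [ext_br br v (0,1)])) (wd [ext_br br v (0,1)]))
     = fsub (fm cc (wd [v])) (fm (wd [v]) cc)"
    by (simp add: cc_def fm_wd_wd fun_eq_iff fapp)
  ultimately show ?thesis by simp
qed

lemma cen_cc: "cen I1 cc"
  by (rule cen_intro[OF I1 cc_FC cc_letter])

lemma cen_E: "cen I1 (E i)"
  unfolding E_def by (rule cen_ev[OF I1 cen_cc])

lemma c_pow: "fsub (fpow cc p) cc \<in> I1"
proof -
  have m: "fsub (fsub (wd (replicate p (0,1))) (wd [ext_pmap pm p \<chi> (0,1)])) (fsc ((\<lambda>_. 0) (0::'l,1::'k) ^ p) (wd [])) \<in> I1"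
    unfolding I1_def by (rule r_red)
  moreover have "fsub (fsub (wd (replicate p (0,1))) (wd [ext_pmap pm p \<chi> (0,1)])) (fsc ((\<lambda>_. 0) (0::'l,1::'k) ^ p) (wd []))
     = fsub (fpow cc p) cc"
    using p_pos by (simp add: ext_pmap_def cc_def wd_replicate zero_power)
  ultimately show ?thesis by simp
qed

lemma ev_Z: "ev cc ([:0,1:] ^ p - [:0,1:]) \<in> I1"
  using c_pow by (simp add: ev_diff ev_power ev_x)

lemma E_sum: "fsum E (prime_subfield p) = wd []"
proof -
  have "E = (\<lambda>i. ev cc (Lag p i))" by (rule ext) (simp add: E_def)
  then have "fsum E (prime_subfield p) = ev cc (\<Sum>i\<in>prime_subfield p. Lag p i)"
    by (simp add: ev_sum)
  also have "\<dots> = wd []" using Lag_sum[OF p c] by simp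
  finally show ?thesis .
qed

lemma E_root: "i \<in> prime_subfield p \<Longrightarrow> fm (E i) (fsub cc (fsc i (wd []))) \<in> I1"
proof -
  assume i: "i \<in> prime_subfield p"
  have "ev cc [:-i, 1:] = fsub cc (fsc i (wd []))"
    by (simp add: ev_pCons ev_const fun_eq_iff fapp)
  then have "fm (E i) (fsub cc (fsc i (wd []))) = fm (ev cc (Lag p i)) (ev cc [:-i, 1:])"
    by (simp add: E_def)
  also have "\<dots> = ev cc (Lag p i * [:-i, 1:])" by (rule ev_mult[symmetric]) simp
  also have "\<dots> = fsc (inverse (\<Prod>j\<in>prime_subfield p - {i}. (i - j))) (ev cc ([:0,1:] ^ p - [:0,1:]))"
    unfolding Lag_root[OF p c i] ev_smult ..
  finally show ?thesis using id_fsc[OF I1 ev_Z] by simp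
qed

lemma T_letter:
  assumes i: "i \<in> prime_subfield p"
  shows "fm (E i) (fsub (wd [v]) (\<theta> (\<psi> i (wd [v])))) \<in> I1"
proof -
  obtain x a where v: "v = (x, a)" by fastforce
  let ?lin = "fsub (fsub (wd [(x,0) + (0,a)]) (wd [(x,0)])) (wd [(0,a)])"
  let ?scl = "fsub (wd [ext_scale sc a (0,1)]) (fsc a (wd [(0,1)]))"
  have lin: "?lin \<in> I1" unfolding I1_def by (rule r_lin)
  have scl: "?scl \<in> I1" unfolding I1_def by (rule r_sc)
  have eq: "fsub (wd [v]) (\<theta> (\<psi> i (wd [v]))) = fadd (fadd ?lin ?scl) (fsc a (fsub cc (fsc i (wd []))))"
    by (simp add: v \<psi>_letter \<theta>_fadd \<theta>_fsc \<theta>_letter ext_scale_def cc_def fun_eq_iff fapp algebra_simps)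
  show ?thesis unfolding eq fm_fadd_right fm_fsc_right
    by (intro id_fadd[OF I1] id_fsc[OF I1] id_fm_left[OF I1] E_FC lin scl E_root[OF i])
qed

lemma T_hom: "f \<in> FC \<Longrightarrow> h \<in> FC \<Longrightarrow> \<theta> (\<psi> i (fm f h)) = fm (\<theta> (\<psi> i f)) (\<theta> (\<psi> i h))"
  by (simp add: \<psi>_fm \<theta>_fm)

lemma E_T:
  assumes i: "i \<in> prime_subfield p" and f: "f \<in> FC"
  shows "fm (E i) (fsub f (\<theta> (\<psi> i f))) \<in> I1"
  using f
proof (induction f rule: fa_induct)
  case zero
  have "\<psi> i fzero = fzero" by (simp add: \<psi>_def)
  then have "\<theta> (\<psi> i fzero) = fzero" by (simp add: \<theta>_def)
  then show ?case using id_fzero[OF I1] by simp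
next
  case (add g h)
  have "fsub (fadd g h) (\<theta> (\<psi> i (fadd g h))) = fadd (fsub g (\<theta> (\<psi> i g))) (fsub h (\<theta> (\<psi> i h)))"
    using add by (simp add: \<psi>_fadd \<theta>_fadd fun_eq_iff fapp)
  then show ?case using add by (simp add: fm_fadd_right id_fadd[OF I1])
next
  case (sc t g)
  have "fsub (fsc t g) (\<theta> (\<psi> i (fsc t g))) = fsc t (fsub g (\<theta> (\<psi> i g)))"
    using sc by (simp add: \<psi>_fsc \<theta>_fsc fun_eq_iff fapp algebra_simps)
  then show ?case using sc by (simp add: fm_fsc_right id_fsc[OF I1])
next
  case (wd w)
  show ?case
  proof (induction w)
    case Nil
    have "\<theta> (\<psi> i (wd [])) = wd []" by (simp add: \<psi>_def \<theta>_def)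
    then show ?case using id_fzero[OF I1] by simp
  next
    case (Cons v w)
    let ?V = "wd [v]" and ?W = "wd w"
    let ?TV = "\<theta> (\<psi> i ?V)" and ?TW = "\<theta> (\<psi> i ?W)"
    have e: "wd (v#w) = fm ?V ?W" by (simp add: fm_wd_wd)
    have "fm (E i) (fsub (fm ?V ?W) (fm ?TV ?TW)) =
       fadd (fm (fm (E i) (fsub ?V ?TV)) ?W)
            (fadd (fm (fsub (fm (E i) ?TV) (fm ?TV (E i))) (fsub ?W ?TW)) (fm ?TV (fm (E i) (fsub ?W ?TW))))"
      by (simp add: fm_fsub_left fm_fsub_right fm_assoc fun_eq_iff fapp)
    moreover have "\<dots> \<in> I1"
      by (intro id_fadd[OF I1] id_fm_left[OF I1] id_fm_right[OF I1] T_letter[OF i] Cons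
            cenD[OF I1 cen_E]) simp_all
    ultimately show ?case unfolding e T_hom[OF FC_wd FC_wd] by simp
  qed
qed

end




context LA begin

lemma \<theta>_zero[simp]: "\<theta> fzero = fzero" by (simp add: \<theta>_def)
lemma \<psi>_zero[simp]: "\<psi> j fzero = fzero" by (simp add: \<psi>_def)

lemma S_ideal:
  "ideal {g \<in> FC. fm (E i) (\<theta> g) \<in> I1} free_alg"
proof (rule idealI[OF ring_fa])
  let ?S = "{g \<in> FC. fm (E i) (\<theta> g) \<in> I1}"
  show "subgroup ?S (add_monoid free_alg)"
  proof (rule subgroup.intro)
    show "?S \<subseteq> carrier (add_monoid free_alg)" by auto
    fix x y assume x: "x \<in> ?S" and y: "y \<in> ?S"
    then show "x \<otimes>\<^bsub>add_monoid free_alg\<^esub> y \<in> ?S"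
      by (auto simp: fa_simps \<theta>_fadd fm_fadd_right intro: id_fadd[OF I1])
  next
    show "\<one>\<^bsub>add_monoid free_alg\<^esub> \<in> ?S" using id_fzero[OF I1] by (simp add: fa_simps)
  next
    fix x assume x: "x \<in> ?S"
    have "inv\<^bsub>add_monoid free_alg\<^esub> x = fsc (-1) x"
      using fa_neg[of x] x by (simp add: a_inv_def)
    then show "inv\<^bsub>add_monoid free_alg\<^esub> x \<in> ?S"
      using x by (auto simp: \<theta>_fsc fm_fsc_right intro: id_fsc[OF I1])
  qed
next
  fix a x :: "'l list \<Rightarrow> 'k"
  assume a: "a \<in> {g \<in> FC. fm (E i) (\<theta> g) \<in> I1}" and x: "x \<in> carrier free_alg"
  then have aF: "a \<in> FC" and aI: "fm (E i) (\<theta> a) \<in> I1" by auto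
  have "fm (E i) (\<theta> (fm x a)) = fadd (fm (fsub (fm (E i) (\<theta> x)) (fm (\<theta> x) (E i))) (\<theta> a))
      (fm (\<theta> x) (fm (E i) (\<theta> a)))"
    using aF x by (simp add: \<theta>_fm fm_fsub_left fm_assoc fun_eq_iff fapp)
  moreover have "\<dots> \<in> I1"
    by (intro id_fadd[OF I1] id_fm_right[OF I1] id_fm_left[OF I1] cenD[OF I1 cen_E] aI) simp_all
  ultimately show "x \<otimes>\<^bsub>free_alg\<^esub> a \<in> {g \<in> FC. fm (E i) (\<theta> g) \<in> I1}"
    using aF x by (simp add: fa_simps)
next
  fix a x :: "'l list \<Rightarrow> 'k"
  assume a: "a \<in> {g \<in> FC. fm (E i) (\<theta> g) \<in> I1}" and x: "x \<in> carrier free_alg"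
  then have aF: "a \<in> FC" and aI: "fm (E i) (\<theta> a) \<in> I1" by auto
  have "fm (E i) (\<theta> (fm a x)) = fm (fm (E i) (\<theta> a)) (\<theta> x)"
    using aF x by (simp add: \<theta>_fm fm_assoc)
  moreover have "\<dots> \<in> I1" by (intro id_fm_right[OF I1] aI) simp
  ultimately show "a \<otimes>\<^bsub>free_alg\<^esub> x \<in> {g \<in> FC. fm (E i) (\<theta> g) \<in> I1}"
    using aF x by (simp add: fa_simps)
qed

lemma E_theta_gens:
  assumes i: "i \<in> prime_subfield p"
  shows "env_rels sc br \<union> red_rels pm p (\<lambda>x. i * \<chi> x) \<subseteq> {g \<in> FC. fm (E i) (\<theta> g) \<in> I1}"
proof
  fix r assume r: "r \<in> env_rels sc br \<union> red_rels pm p (\<lambda>x. i * \<chi> x)"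
  have rFC: "r \<in> FC" using r env_rels_FC red_rels_FC by blast
  have "fm (E i) (\<theta> r) \<in> I1" using r unfolding env_rels_def red_rels_def
  proof (elim UnE CollectE exE conjE)
    fix a b :: 'l assume r: "r = (\<lambda>w. wd [a + b] w - wd [a] w - wd [b] w)"
    have e: "r = fsub (fsub (wd [a+b]) (wd [a])) (wd [b])" by (simp add: r fun_eq_iff fapp)
    have t1: "\<theta> (fsub (fsub (wd [a+b]) (wd [a])) (wd [b])) = fsub (fsub (wd [(a,0) + (b,0)]) (wd [(a,0)])) (wd [(b,0)])"
      by (simp add: \<theta>_fsub \<theta>_letter)
    have t2: "fsub (fsub (wd [(a,0) + (b,0)]) (wd [(a,0)])) (wd [(b,0::'k)]) \<in> I1" unfolding I1_def by (rule r_lin)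
    have "\<theta> r \<in> I1" unfolding e t1 by (rule t2)
    then show "fm (E i) (\<theta> r) \<in> I1" by (rule id_fm_left[OF I1 E_FC])
  next
    fix t and a :: 'l assume r: "r = (\<lambda>w. wd [sc t a] w - t * wd [a] w)"
    have e: "r = fsub (wd [sc t a]) (fsc t (wd [a]))" by (simp add: r fun_eq_iff fapp)
    have t1: "\<theta> (fsub (wd [sc t a]) (fsc t (wd [a]))) = fsub (wd [ext_scale sc t (a,0)]) (fsc t (wd [(a,0)]))"
      by (simp add: \<theta>_fsub \<theta>_fsc \<theta>_letter ext_scale_def)
    moreover have t2: "\<dots> \<in> I1" unfolding I1_def by (rule r_sc)
    have "\<theta> r \<in> I1" unfolding e t1 by (rule t2)
    then show "fm (E i) (\<theta> r) \<in> I1" by (rule id_fm_left[OF I1 E_FC])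
  next
    fix a b :: 'l assume r: "r = (\<lambda>w. wd [a, b] w - wd [b, a] w - wd [br a b] w)"
    have e: "r = fsub (fsub (wd [a, b]) (wd [b, a])) (wd [br a b])" by (simp add: r fun_eq_iff fapp)
    have w2: "\<theta> (wd [u, v]) = wd [(u, 0), (v, 0)]" for u v
      by (simp add: \<theta>_def wp_Cons fm_wd_wd)
    have t1: "\<theta> (fsub (fsub (wd [a, b]) (wd [b, a])) (wd [br a b]))
        = fsub (fsub (wd [(a,0), (b,0)]) (wd [(b,0), (a,0)])) (wd [ext_br br (a,0) (b,0)])"
      by (simp add: \<theta>_fsub \<theta>_letter w2 ext_br_def)
    moreover have t2: "\<dots> \<in> I1" unfolding I1_def by (rule r_br)
    have "\<theta> r \<in> I1" unfolding e t1 by (rule t2)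
    then show "fm (E i) (\<theta> r) \<in> I1" by (rule id_fm_left[OF I1 E_FC])
  next
    fix x :: 'l
    assume r: "r = (\<lambda>w. wd (replicate p x) w - wd [pm x] w - (i * \<chi> x) ^ p * wd [] w)"
    have e: "r = fsub (fsub (wd (replicate p x)) (wd [pm x])) (fsc ((i * \<chi> x) ^ p) (wd []))"
      by (simp add: r fun_eq_iff fapp)
    let ?R = "fsub (fsub (wd (replicate p (x, 0))) (wd [ext_pmap pm p \<chi> (x, 0)])) (fsc ((\<lambda>_. 0) (x,0::'k) ^ p) (wd []))"
    let ?L = "fsub (fsub (wd [(pm x, 0) + (0, \<chi> x ^ p)]) (wd [(pm x, 0)])) (wd [(0, \<chi> x ^ p)])"
    let ?S = "fsub (wd [ext_scale sc (\<chi> x ^ p) (0, 1)]) (fsc (\<chi> x ^ p) (wd [(0, 1)]))"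
    have R: "?R \<in> I1" unfolding I1_def by (rule r_red)
    have L: "?L \<in> I1" unfolding I1_def by (rule r_lin)
    have S: "?S \<in> I1" unfolding I1_def by (rule r_sc)
    have trep: "\<theta> (wd (replicate p x)) = wd (replicate p (x, 0))"
      by (simp add: \<theta>_def wp_replicate wd_replicate')
    have t1: "\<theta> (fsub (fsub (wd (replicate p x)) (wd [pm x])) (fsc ((i * \<chi> x) ^ p) (wd [])))
       = fadd (fadd (fadd ?R ?L) ?S) (fsc (\<chi> x ^ p) (fsub cc (fsc i (wd []))))"
      using p_pos FF_fermat[OF i]
      by (simp add: \<theta>_fsub \<theta>_fsc \<theta>_letter trep ext_pmap_def ext_scale_def cc_def zero_power
          power_mult_distrib fun_eq_iff fapp algebra_simps)
    moreover have "fm (E i) (fadd (fadd (fadd ?R ?L) ?S) (fsc (\<chi> x ^ p) (fsub cc (fsc i (wd []))))) \<in> I1"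
      unfolding fm_fadd_right fm_fsc_right
      by (intro id_fadd[OF I1] id_fsc[OF I1] id_fm_left[OF I1] E_FC R L S E_root[OF i])
    ultimately show "fm (E i) (\<theta> r) \<in> I1" using e by simp
  qed
  then show "r \<in> {g \<in> FC. fm (E i) (\<theta> g) \<in> I1}" using rFC by simp
qed

lemma E_theta: "i \<in> prime_subfield p \<Longrightarrow> g \<in> I2 i \<Longrightarrow> fm (E i) (\<theta> g) \<in> I1"
proof -
  assume i: "i \<in> prime_subfield p" and g: "g \<in> I2 i"
  have "I2 i \<subseteq> {g \<in> FC. fm (E i) (\<theta> g) \<in> I1}"
    unfolding I2_def by (rule red_ideal_minimal[OF S_ideal E_theta_gens[OF i]])
  then show ?thesis using g by blast
qed

lemma kernel:
  assumes f: "f \<in> FC" and k: "\<And>i. i \<in> prime_subfield p \<Longrightarrow> \<psi> i f \<in> I2 i"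
  shows "f \<in> I1"
proof -
  have "f = fm (fsum E (prime_subfield p)) f" by (simp add: E_sum)
  also have "\<dots> = fsum (\<lambda>i. fadd (fm (E i) (fsub f (\<theta> (\<psi> i f)))) (fm (E i) (\<theta> (\<psi> i f)))) (prime_subfield p)"
    by (simp add: fm_fsum_left fm_fsub_right fun_eq_iff fapp)
  also have "\<dots> \<in> I1"
    by (intro id_fsum[OF I1] id_fadd[OF I1] E_T f E_theta k)
  finally show ?thesis .
qed

lemma \<psi>_\<theta>: "f \<in> FC \<Longrightarrow> \<psi> j (\<theta> f) = f"
proof (induction f rule: fa_induct)
  case zero then show ?case by simp
next
  case (add g h) then show ?case by (simp add: \<theta>_fadd \<psi>_fadd)
next
  case (sc t g) then show ?case by (simp add: \<theta>_fsc \<psi>_fsc)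
next
  case (wd w) show ?case
  proof (induction w)
    case Nil then show ?case by simp
  next
    case (Cons v w)
    have e: "wd (v#w) = fm (wd [v]) (wd w)" by (simp add: fm_wd_wd)
    show ?case unfolding e by (simp add: \<theta>_fm \<psi>_fm \<theta>_letter \<psi>_letter Cons)
  qed
qed

lemma \<psi>_E:
  assumes i: "i \<in> prime_subfield p" and j: "j \<in> prime_subfield p"
  shows "fsub (\<psi> j (E i)) (fsc (if j = i then 1 else 0) (wd [])) \<in> I2 j"
proof -
  have "\<psi> j (E i) = ev (\<psi> j cc) (Lag p i)" by (simp add: E_def \<psi>_def subst_ev)
  also have "\<psi> j cc = fadd (wd [0]) (fsc j (wd []))" by (simp add: cc_def \<psi>_letter)
  finally have e: "\<psi> j (E i) = ev (fadd (wd [0]) (fsc j (wd []))) (Lag p i)" .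
  have z: "wd [0] \<in> I2 j" unfolding I2_def by (rule r_zero)
  show ?thesis unfolding e using ev_congr[OF I2 z, of j "Lag p i"] Lag_eval[OF p c i j] by simp
qed

end




lemma fsum_cong: "(\<And>i. i \<in> A \<Longrightarrow> F i = G i) \<Longrightarrow> fsum F A = fsum G A"
  by (simp add: fun_eq_iff fapp)

context LA begin

definition "\<Phi> f = (\<lambda>j\<in>prime_subfield p. I2 j +>\<^bsub>free_alg\<^esub> \<psi> j f)"
definition "\<phi> X = \<Phi> (SOME f. f \<in> X \<and> f \<in> FC)"

abbreviation "QA \<equiv> (free_alg :: (('l \<times> 'k) list \<Rightarrow> 'k) ring) Quot I1"
abbreviation "QB \<equiv> ring_prod (prime_subfield p) (\<lambda>j. (free_alg :: ('l list \<Rightarrow> 'k) ring) Quot I2 j)"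

lemma \<Phi>_cong: "f \<in> FC \<Longrightarrow> g \<in> FC \<Longrightarrow> fsub g f \<in> I1 \<Longrightarrow> \<Phi> g = \<Phi> f"
proof -
  assume f: "f \<in> FC" and g: "g \<in> FC" and d: "fsub g f \<in> I1"
  have "I2 j +>\<^bsub>free_alg\<^esub> \<psi> j g = I2 j +>\<^bsub>free_alg\<^esub> \<psi> j f" if j: "j \<in> prime_subfield p" for j
  proof -
    have "\<psi> j (fsub g f) \<in> I2 j" by (rule \<psi>_I1[OF j d])
    then have "fsub (\<psi> j g) (\<psi> j f) \<in> I2 j" using f g by (simp add: \<psi>_fsub)
    then show ?thesis using q_eq[OF I2] by simp
  qed
  then show ?thesis unfolding \<Phi>_def by (intro restrict_ext) simp
qed

lemma \<phi>_rep: "f \<in> FC \<Longrightarrow> \<phi> (I1 +>\<^bsub>free_alg\<^esub> f) = \<Phi> f"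
proof -
  assume f: "f \<in> FC"
  have ex: "\<exists>g. g \<in> I1 +>\<^bsub>free_alg\<^esub> f \<and> g \<in> FC"
    by (rule exI[of _ f]) (simp add: f q_mem[OF I1 f f] id_fzero[OF I1])
  define g where "g = (SOME g. g \<in> I1 +>\<^bsub>free_alg\<^esub> f \<and> g \<in> FC)"
  have g: "g \<in> I1 +>\<^bsub>free_alg\<^esub> f" "g \<in> FC" using someI_ex[OF ex] unfolding g_def by auto
  have "fsub g f \<in> I1" using q_mem[OF I1 f g(2)] g(1) by simp
  then show ?thesis unfolding \<phi>_def g_def[symmetric] using \<Phi>_cong f g(2) by simp
qed

lemma \<Phi>_carrier: "\<Phi> f \<in> carrier QB"
  unfolding \<Phi>_def ring_prod_def using \<psi>_FC by (fastforce simp: q_carrier[OF I2])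

lemma QA_carrier: "X \<in> carrier QA \<Longrightarrow> \<exists>f\<in>FC. X = I1 +>\<^bsub>free_alg\<^esub> f"
  using q_carrier[OF I1] by simp

lemma \<phi>_hom: "\<phi> \<in> ring_hom QA QB"
proof (rule ring_hom_memI)
  fix x assume "x \<in> carrier QA"
  then obtain f where f: "f \<in> FC" "x = I1 +>\<^bsub>free_alg\<^esub> f" using QA_carrier by blast
  show "\<phi> x \<in> carrier QB" using f by (simp add: \<phi>_rep \<Phi>_carrier)
next
  fix x y assume "x \<in> carrier QA" "y \<in> carrier QA"
  then obtain f g where f: "f \<in> FC" "x = I1 +>\<^bsub>free_alg\<^esub> f" and g: "g \<in> FC" "y = I1 +>\<^bsub>free_alg\<^esub> g"
    using QA_carrier by metis
  show "\<phi> (x \<otimes>\<^bsub>QA\<^esub> y) = \<phi> x \<otimes>\<^bsub>QB\<^esub> \<phi> y"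
    using f g by (simp add: q_mult[OF I1] q_mult[OF I2] \<phi>_rep \<Phi>_def ring_prod_def \<psi>_fm cong: restrict_cong)
  show "\<phi> (x \<oplus>\<^bsub>QA\<^esub> y) = \<phi> x \<oplus>\<^bsub>QB\<^esub> \<phi> y"
    using f g by (simp add: q_add[OF I1] q_add[OF I2] \<phi>_rep \<Phi>_def ring_prod_def \<psi>_fadd cong: restrict_cong)
next
  show "\<phi> \<one>\<^bsub>QA\<^esub> = \<one>\<^bsub>QB\<^esub>"
    by (simp add: q_one[OF I1] q_one[OF I2] \<phi>_rep \<Phi>_def ring_prod_def cong: restrict_cong)
qed

lemma \<phi>_inj: "inj_on \<phi> (carrier QA)"
proof (rule inj_onI)
  fix x y assume x: "x \<in> carrier QA" and y: "y \<in> carrier QA" and e: "\<phi> x = \<phi> y"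
  obtain f where f: "f \<in> FC" "x = I1 +>\<^bsub>free_alg\<^esub> f" using QA_carrier x by blast
  obtain g where g: "g \<in> FC" "y = I1 +>\<^bsub>free_alg\<^esub> g" using QA_carrier y by blast
  have eq: "\<Phi> f = \<Phi> g" using e f g by (simp add: \<phi>_rep)
  have k: "\<psi> i (fsub f g) \<in> I2 i" if i: "i \<in> prime_subfield p" for i
  proof -
    have "\<Phi> f i = \<Phi> g i" using eq by simp
    then have "I2 i +>\<^bsub>free_alg\<^esub> \<psi> i f = I2 i +>\<^bsub>free_alg\<^esub> \<psi> i g" using i by (simp add: \<Phi>_def)
    then have "fsub (\<psi> i f) (\<psi> i g) \<in> I2 i" using q_eq[OF I2 \<psi>_FC \<psi>_FC] by blast
    then show ?thesis using f g by (simp add: \<psi>_fsub)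
  qed
  have "fsub f g \<in> I1" by (rule kernel[OF FC_fsub[OF f(1) g(1)] k])
  then show "x = y" using f g q_eq[OF I1] by simp
qed

lemma \<phi>_surj: "\<phi> ` carrier QA = carrier QB"
proof
  show "\<phi> ` carrier QA \<subseteq> carrier QB" using \<phi>_hom by (auto simp: ring_hom_def)
next
  show "carrier QB \<subseteq> \<phi> ` carrier QA"
  proof
    fix b assume b: "b \<in> carrier QB"
    then have b': "b \<in> PiE (prime_subfield p) (\<lambda>j. carrier (free_alg Quot I2 j))"
      by (simp add: ring_prod_def)
    define g where "g j = (SOME g. g \<in> FC \<and> b j = I2 j +>\<^bsub>free_alg\<^esub> g)" for j
    have g: "g j \<in> FC \<and> b j = I2 j +>\<^bsub>free_alg\<^esub> g j" if j: "j \<in> prime_subfield p" for j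
    proof -
      have "b j \<in> carrier (free_alg Quot I2 j)" using b' j by auto
      then have "\<exists>g. g \<in> FC \<and> b j = I2 j +>\<^bsub>free_alg\<^esub> g" using q_carrier[OF I2] by blast
      then show ?thesis unfolding g_def by (rule someI_ex)
    qed
    define h where "h = fsum (\<lambda>i. fm (E i) (\<theta> (g i))) (prime_subfield p)"
    have hF: "h \<in> FC" unfolding h_def by (intro FC_fsum FC_fm E_FC \<theta>_FC)
    have "\<Phi> h = b"
    proof (rule PiE_ext[OF _ b'])
      show "\<Phi> h \<in> PiE (prime_subfield p) (\<lambda>j. carrier (free_alg Quot I2 j))"
        using \<Phi>_carrier by (simp add: ring_prod_def)
      fix j :: 'k assume j: "j \<in> prime_subfield p"
      have gF: "\<And>i. i \<in> prime_subfield p \<Longrightarrow> g i \<in> FC" using g by blast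
      have "\<psi> j h = fsum (\<lambda>i. \<psi> j (fm (E i) (\<theta> (g i)))) (prime_subfield p)"
        unfolding h_def \<psi>_def by (rule subst_fsum) simp
      also have "\<dots> = fsum (\<lambda>i. fm (\<psi> j (E i)) (g i)) (prime_subfield p)"
        by (rule fsum_cong) (simp add: \<psi>_fm \<psi>_\<theta> gF)
      finally have ph: "\<psi> j h = fsum (\<lambda>i. fm (\<psi> j (E i)) (g i)) (prime_subfield p)" .
      have fin: "finite (prime_subfield p :: 'k set)" by (rule prime_subfield_card(1)[OF p c])
      have d: "(\<Sum>i\<in>prime_subfield p. (if j = i then 1 else 0) * g i w) = g j w" for w
      proof -
        have "(\<Sum>i\<in>prime_subfield p. (if j = i then 1 else 0) * g i w) = (\<Sum>i\<in>prime_subfield p. if j = i then g i w else 0)"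
          by (rule sum.cong) auto
        also have "\<dots> = g j w" using fin j by (simp add: sum.delta')
        finally show ?thesis .
      qed
      have "fsub (\<psi> j h) (g j) = fsum (\<lambda>i. fm (fsub (\<psi> j (E i)) (fsc (if j = i then 1 else 0) (wd []))) (g i)) (prime_subfield p)"
        unfolding ph by (simp add: fm_fsub_left fm_fsc_left fun_eq_iff fapp sum_subtractf d)
      also have "\<dots> \<in> I2 j"
        by (intro id_fsum[OF I2] id_fm_right[OF I2] \<psi>_E j gF)
      finally have "fsub (\<psi> j h) (g j) \<in> I2 j" .
      then have "I2 j +>\<^bsub>free_alg\<^esub> \<psi> j h = I2 j +>\<^bsub>free_alg\<^esub> g j" using q_eq[OF I2] gF j by simp
      then show "\<Phi> h j = b j" using g[OF j] j by (simp add: \<Phi>_def)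
    qed
    moreover have "I1 +>\<^bsub>free_alg\<^esub> h \<in> carrier QA" using q_carrier[OF I1] hF by blast
    ultimately show "b \<in> \<phi> ` carrier QA" using \<phi>_rep[OF hF] by (metis image_eqI)
  qed
qed

lemma \<phi>_iso: "\<phi> \<in> ring_iso QA QB"
  unfolding ring_iso_def bij_betw_def using \<phi>_hom \<phi>_inj \<phi>_surj by simp

lemma \<phi>_scalar:
  "\<phi> (env_scalar (ext_scale sc) (ext_br br) (ext_pmap pm p \<chi>) p (\<lambda>_. 0) t)
    = (\<lambda>i\<in>prime_subfield p. env_scalar sc br pm p (\<lambda>x. i * \<chi> x) t)"
proof -
  have e: "(\<lambda>w. t * wd [] w) = fsc t (wd [])" by (simp add: fun_eq_iff fapp)
  show ?thesis
    unfolding env_scalar_def e I1_def[symmetric] I2_def[symmetric]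
    by (simp add: \<phi>_rep \<Phi>_def \<psi>_fsc cong: restrict_cong)
qed

lemma main:
  "alg_iso
    (reduced_env (ext_scale sc) (ext_br br) (ext_pmap pm p \<chi>) p (\<lambda>_. 0))
    (ring_prod (prime_subfield p) (\<lambda>i. reduced_env sc br pm p (\<lambda>x. i * \<chi> x)))
    (env_scalar (ext_scale sc) (ext_br br) (ext_pmap pm p \<chi>) p (\<lambda>_. 0))
    (\<lambda>c. \<lambda>i\<in>prime_subfield p. env_scalar sc br pm p (\<lambda>x. i * \<chi> x) c)"
  unfolding alg_iso_def reduced_env_def I1_def[symmetric] I2_def[symmetric]
  using \<phi>_iso \<phi>_scalar by blast

end


theorem corollary1p3p5:
  fixes sc :: "'k::field \<Rightarrow> 'l::ab_group_add \<Rightarrow> 'l"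
    and br :: "'l \<Rightarrow> 'l \<Rightarrow> 'l"
    and pm :: "'l \<Rightarrow> 'l"
    and p :: nat
    and \<chi> :: "'l \<Rightarrow> 'k"
  assumes "prime p"
    and "CHAR('k) = p"
    and "alg_closed TYPE('k)"
    and "restricted_lie_algebra sc br pm p"
    and "\<exists>B. finite B \<and> module.span sc B = UNIV"
    and "Vector_Spaces.linear sc (*) \<chi>"
  shows "alg_iso
    (reduced_env (ext_scale sc) (ext_br br) (ext_pmap pm p \<chi>) p (\<lambda>_. 0))
    (ring_prod (prime_subfield p) (\<lambda>i. reduced_env sc br pm p (\<lambda>x. i * \<chi> x)))
    (env_scalar (ext_scale sc) (ext_br br) (ext_pmap pm p \<chi>) p (\<lambda>_. 0))
    (\<lambda>c. \<lambda>i\<in>prime_subfield p. env_scalar sc br pm p (\<lambda>x. i * \<chi> x) c)"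
proof -
  interpret LA sc br pm p \<chi>
    by (rule LA.intro[OF assms(1) assms(2) assms(4) assms(6)])
  show ?thesis by (rule main)
qed

end
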